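(* Let $P$ be a planar point set of $n$ points in general position, let $W\in\mathbb{Z}^{n\times3}$ be arbitrary, and let $\mathcal{Q}$ be an arbitrary quadrangle tree for $P$. Then there exists an injective map \[ \Phi: V(P,W)\hookrightarrow \mathrm{OD}(P,\mathcal{Q})\times\mathrm{CA}(W)\times\mathrm{HL}(P). \]
   Context: General position: no duplicates, no three collinear. $\mathrm{CH}(P)$ is the convex hull, $\mathrm{ch}(P)$ the points of $P$ on its boundary, $k=|\mathrm{ch}(P)|$. $\mathbb{I}_P$ is the set of arrays $I_P$ of length $n$ (indices $1,\dots,n$) storing the points of $P$. A hull list of $I_P$ is a sequence $(h_1,\dots,h_k)$ such that $I_P[h_1],\dots,I_P[h_k]$ are the points of $\mathrm{ch}(P)$ in cyclic order with $I_P[h_1]$ the leftmost. $\mathrm{HL}(P)$ is the set of all integer lists of length $k$ that are a hull list of some $I_P\in\mathbb{I}_P$. A witness list of $I_P$ is $W=(a_i,b_i,c_i)_{i=1}^n$ with $a_i=b_i=c_i=-1$ if $I_P[i]\in\mathrm{ch}(P)$ and otherwise $I_P[i]$ in the interior of triangle $(I_P[a_i],I_P[b_i],I_P[c_i])$. $V(P,W)=\{I_P\in\mathbb{I}_P: W\text{ is a witness list of }I_P\}$. A corner assignment of $W$ is a map $C$ on $[n]$ with $C(i)\in\{a_i,b_i,c_i\}$ for all $i$; $\mathrm{CA}(W)$ is their set. A rooted convex polygon $(C,p,q)$ is a convex polygon with a chosen edge $pq$; for distinct vertices $r,s$ of $C$, $C^{rs}$ is the piece of $C$ cut by line $rs$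 not containing $pq$. A quadrangle tree of $(C,p,q)$ is a binary tree whose nodes store quadrangles spanned by (up to) four vertices of $C$: the root stores $p,q,s,r$ where $rs$ is an edge of $C$ (allowing $p=r$ and/or $q=s$); if $p\ne r$ the root has a child whose subtree is a quadrangle tree of $(C^{pr},p,r)$; if $q\ne s$ the root has a child whose subtree is a quadrangle tree of $(C^{qs},q,s)$. Each node's rooted edge is the chosen edge of its rooted polygon. A quadrangle tree for $P$ is a quadrangle tree of $(\mathrm{CH}(P),p,q)$ for an edge $pq$ of $\mathrm{CH}(P)$. The population of a node is the set of points of $P$ on or inside its quadrangle except those on the line of its rooted edge; $r(x)$ denotes the node whose population contains $x$. Partial order: $x\prec_{\mathcal{Q}}y$ if $r(x)$ is a strict ancestor of $r(y)$, or $r(x)=r(y)$ and $y$ lies deeper than $x$ inside the halfplane bounded by the rooted-edge line of $r(x)$ containing its quadrangle. A downdraft is a map $\varphi:P-\mathrm{ch}(P)\to P$ with $x\prec_{\mathcal{Q}}\varphi(x)$ for all $x$; an ordered downdraft is a downdraft plus a total order on each fiber $\varphi^{-1}(\{y\})$; $\mathrm{OD}(P,\mathcal{Q})$ is the set of ordered downdrafts. *)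

theory Defs
  imports "HOL-Analysis.Analysis" "HOL-Library.FuncSet"
begin

type_synonym pt = "real \<times> real"

definition gen_pos :: "pt set \<Rightarrow> bool" where
  "gen_pos P \<longleftrightarrow> (\<forall>a\<in>P. \<forall>b\<in>P. \<forall>c\<in>P. a \<noteq> b \<and> a \<noteq> c \<and> b \<noteq> c \<longrightarrow> \<not> collinear {a, b, c})"

definition chP :: "pt set \<Rightarrow> pt set" where
  "chP P = {x \<in> P. x \<in> frontier (convex hull P)}"

text \<open>Orientation determinant: positive iff c lies strictly to the left of the directed line a->b.\<close>
definition orient :: "pt \<Rightarrow> pt \<Rightarrow> pt \<Rightarrow> real" where
  "orient a b c = (fst b - fst a) * (snd c - snd a) - (snd b - snd a) * (fst c - fst a)"

definition ccw_cyclic :: "pt list \<Rightarrow> bool" where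
  "ccw_cyclic L \<longleftrightarrow> distinct L \<and>
     (\<forall>i < length L. \<forall>z \<in> set L. z \<noteq> L ! i \<and> z \<noteq> L ! ((i + 1) mod length L) \<longrightarrow>
        orient (L ! i) (L ! ((i + 1) mod length L)) z > 0)"

definition leftmost_in :: "pt \<Rightarrow> pt set \<Rightarrow> bool" where
  "leftmost_in a S \<longleftrightarrow> a \<in> S \<and> (\<forall>z\<in>S. fst a < fst z \<or> (fst a = fst z \<and> snd a \<le> snd z))"

text \<open>Arrays I_P storing the points of P: lists of length n = |P| with distinct entries
  forming P.  Array indices are 1-based: I[h] = I ! (h - 1).\<close>
definition arrays :: "pt set \<Rightarrow> pt list set" where
  "arrays P = {I. distinct I \<and> set I = P}"

definition aget :: "pt list \<Rightarrow> int \<Rightarrow> pt" where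
  "aget I h = I ! (nat h - 1)"

definition valid_idx :: "pt list \<Rightarrow> int \<Rightarrow> bool" where
  "valid_idx I h \<longleftrightarrow> 1 \<le> h \<and> h \<le> int (length I)"

definition is_hull_list :: "pt set \<Rightarrow> pt list \<Rightarrow> int list \<Rightarrow> bool" where
  "is_hull_list P I hs \<longleftrightarrow>
     (\<forall>h\<in>set hs. valid_idx I h) \<and>
     set (map (aget I) hs) = chP P \<and> ccw_cyclic (map (aget I) hs) \<and>
     hs \<noteq> [] \<and> leftmost_in (aget I (hd hs)) (chP P)"

definition HL :: "pt set \<Rightarrow> int list set" where
  "HL P = {hs. \<exists>I\<in>arrays P. is_hull_list P I hs}"

text \<open>Witness lists: W is an n x 3 integer matrix, given as a list of n triples; entry i-1
  of the list is row i.\<close>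
definition is_witness :: "pt set \<Rightarrow> pt list \<Rightarrow> (int \<times> int \<times> int) list \<Rightarrow> bool" where
  "is_witness P I W \<longleftrightarrow> length W = length I \<and>
     (\<forall>i < length I. case W ! i of (a, b, c) \<Rightarrow>
        (if I ! i \<in> chP P then a = -1 \<and> b = -1 \<and> c = -1
         else valid_idx I a \<and> valid_idx I b \<and> valid_idx I c \<and>
              I ! i \<in> interior (convex hull {aget I a, aget I b, aget I c})))"

definition V :: "pt set \<Rightarrow> (int \<times> int \<times> int) list \<Rightarrow> pt list set" where
  "V P W = {I \<in> arrays P. is_witness P I W}"

text \<open>Corner assignments: maps on [n], given as lists of length n.\<close>
definition CA :: "(int \<times> int \<times> int) list \<Rightarrow> int list set" where
  "CA W = {C. length C = length W \<and>
     (\<forall>i < length W. case W ! i of (a, b, c) \<Rightarrow> C ! i \<in> {a, b, c})}"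

text \<open>Quadrangle trees.  A node stores p q s r and its two (possibly absent) children:
  the child for (C^{pr},p,r) and the child for (C^{qs},q,s).\<close>
datatype qtree = QLeaf | QNode pt pt pt pt qtree qtree

text \<open>A rooted convex polygon (C,p,q) is represented by the list L of its vertices in cyclic
  order starting at p and ending at q (so pq is an edge).  An edge rs of C with r on the p-side
  and s on the q-side is a pair of consecutive entries of L.\<close>
inductive qtree_of :: "pt list \<Rightarrow> qtree \<Rightarrow> bool" where
  "\<lbrakk> Suc j < length L;
     (j = 0 \<and> tL = QLeaf) \<or> (j \<noteq> 0 \<and> qtree_of (take (Suc j) L) tL);
     (Suc j = length L - 1 \<and> tR = QLeaf) \<or> (Suc j \<noteq> length L - 1 \<and> qtree_of (rev (drop (Suc j) L)) tR) \<rbrakk>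
   \<Longrightarrow> qtree_of L (QNode (hd L) (last L) (L ! Suc j) (L ! j) tL tR)"

definition qtree_for :: "pt set \<Rightarrow> qtree \<Rightarrow> bool" where
  "qtree_for P Q \<longleftrightarrow> (\<exists>L. set L = chP P \<and> 2 \<le> length L \<and>
      (ccw_cyclic L \<or> ccw_cyclic (rev L)) \<and> qtree_of L Q)"

fun qnodes :: "qtree \<Rightarrow> (bool list \<times> pt \<times> pt \<times> pt \<times> pt) set" where
  "qnodes QLeaf = {}"
| "qnodes (QNode p q s r tL tR) = {([], p, q, s, r)}
     \<union> (\<lambda>(\<pi>, nd). (False # \<pi>, nd)) ` qnodes tL \<union> (\<lambda>(\<pi>, nd). (True # \<pi>, nd)) ` qnodes tR"

definition pop :: "pt set \<Rightarrow> pt \<times> pt \<times> pt \<times> pt \<Rightarrow> pt set" where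
  "pop P nd = (case nd of (p, q, s, r) \<Rightarrow>
     {x \<in> P. x \<in> convex hull {p, q, s, r} \<and> x \<notin> affine hull {p, q}})"

definition qprec :: "pt set \<Rightarrow> qtree \<Rightarrow> pt \<Rightarrow> pt \<Rightarrow> bool" where
  "qprec P Q x y \<longleftrightarrow> (\<exists>\<pi>1 nd1 \<pi>2 nd2. (\<pi>1, nd1) \<in> qnodes Q \<and> (\<pi>2, nd2) \<in> qnodes Q \<and>
      x \<in> pop P nd1 \<and> y \<in> pop P nd2 \<and>
      ((\<exists>z. z \<noteq> [] \<and> \<pi>2 = \<pi>1 @ z) \<or>
       (\<pi>1 = \<pi>2 \<and> (case nd1 of (p, q, s, r) \<Rightarrow>
           infdist x (affine hull {p, q}) < infdist y (affine hull {p, q})))))"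

definition OD :: "pt set \<Rightarrow> qtree \<Rightarrow> ((pt \<Rightarrow> pt) \<times> pt rel) set" where
  "OD P Q = {(\<phi>, R). \<phi> \<in> (P - chP P) \<rightarrow>\<^sub>E P \<and> (\<forall>x \<in> P - chP P. qprec P Q x (\<phi> x)) \<and>
     R \<subseteq> {(a, b). a \<in> P - chP P \<and> b \<in> P - chP P \<and> \<phi> a = \<phi> b} \<and>
     (\<forall>y\<in>P. linear_order_on {x \<in> P - chP P. \<phi> x = y}
                (R \<inter> ({x \<in> P - chP P. \<phi> x = y} \<times> {x \<in> P - chP P. \<phi> x = y})))}"

end

theory Submission
  imports Defs
begin

lemma orient_cyc: "orient a b c = orient b c a"
  unfolding orient_def by (simp add: algebra_simps)
lemma orient_swap: "orient a c b = - orient a b c"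
  unfolding orient_def by (simp add: algebra_simps)
lemma orient_swap12: "orient b a c = - orient a b c"
  unfolding orient_def by (simp add: algebra_simps)
lemma orient_0[simp]: "orient a a c = 0" "orient a b b = 0" "orient a b a = 0"
  unfolding orient_def by (simp_all add: algebra_simps)

lemma orient_comb:
  assumes "u + v = 1"
  shows "orient a b (u *\<^sub>R x + v *\<^sub>R y) = u * orient a b x + v * orient a b y"
proof -
  have v: "v = 1 - u" using assms by simp
  show ?thesis unfolding orient_def v by (simp add: algebra_simps)
qed

lemma convex_orient_ge: "convex {z. c \<le> s * orient a b z}"
  unfolding convex_def
proof (intro ballI allI impI, simp)
  fix x y :: pt and u v :: real
  assume h: "c \<le> s * orient a b x" "c \<le> s * orient a b y" "0 \<le> u" "0 \<le> v" "u + v = 1"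
  have "s * orient a b (u *\<^sub>R x + v *\<^sub>R y) = u * (s * orient a b x) + v * (s * orient a b y)"
    using orient_comb[OF h(5)] by (simp add: algebra_simps)
  also have "\<dots> \<ge> u * c + v * c" using h by (intro add_mono mult_left_mono) auto
  also have "u * c + v * c = c" using h(5) by (simp flip: distrib_right)
  finally show "c \<le> s * orient a b (u *\<^sub>R x + v *\<^sub>R y)" .
qed

lemma convex_orient_le: "convex {z. s * orient a b z \<le> c}"
proof -
  have "{z. s * orient a b z \<le> c} = {z. - c \<le> (- s) * orient a b z}" by auto
  then show ?thesis using convex_orient_ge by metis
qed

lemma hull_orient_ge:
  assumes "\<And>v. v \<in> S \<Longrightarrow> c \<le> s * orient a b v" "z \<in> convex hull S"
  shows "c \<le> s * orient a b z"
proof -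
  have "convex hull S \<subseteq> {z. c \<le> s * orient a b z}"
    by (rule hull_minimal) (use assms convex_orient_ge in auto)
  then show ?thesis using assms by auto
qed

lemma hull_orient_le:
  assumes "\<And>v. v \<in> S \<Longrightarrow> s * orient a b v \<le> c" "z \<in> convex hull S"
  shows "s * orient a b z \<le> c"
proof -
  have "convex hull S \<subseteq> {z. s * orient a b z \<le> c}"
    by (rule hull_minimal) (use assms convex_orient_le in auto)
  then show ?thesis using assms by auto
qed

lemma triangle_in_hull:
  assumes D: "s * orient a b c > 0" and h1: "s * orient a b z \<ge> 0"
    and h2: "s * orient b c z \<ge> 0" and h3: "s * orient c a z \<ge> 0"
  shows "z \<in> convex hull {a, b, c}"
proof -
  define d where "d = orient a b c"
  have dnz: "d \<noteq> 0" using D d_def by auto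
  define u where "u = orient b c z / d"
  define v where "v = orient c a z / d"
  define w where "w = orient a b z / d"
  have pos: "0 \<le> x / d" if "0 \<le> s * x" for x
  proof -
    have "x / d = (s * x) / (s * d)" using D d_def by auto
    moreover have "0 \<le> (s * x) / (s * d)" using that D d_def by (intro divide_nonneg_pos) auto
    ultimately show ?thesis by simp
  qed
  have "0 \<le> u" "0 \<le> v" "0 \<le> w" unfolding u_def v_def w_def using pos h1 h2 h3 by auto
  moreover have "u + v + w = 1"
  proof -
    have "orient b c z + orient c a z + orient a b z = d"
      unfolding d_def orient_def by (simp add: algebra_simps)
    then show ?thesis unfolding u_def v_def w_def using dnz by (simp add: field_simps)
  qed
  moreover have "u *\<^sub>R a + v *\<^sub>R b + w *\<^sub>R c = z"
  proof -
    have e1: "orient b c z * fst a + orient c a z * fst b + orient a b z * fst c = d * fst z"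
      unfolding d_def orient_def by (simp add: algebra_simps)
    have e2: "orient b c z * snd a + orient c a z * snd b + orient a b z * snd c = d * snd z"
      unfolding d_def orient_def by (simp add: algebra_simps)
    have "u * fst a + v * fst b + w * fst c = fst z"
      unfolding u_def v_def w_def using dnz e1 by (simp add: field_simps)
    moreover have "u * snd a + v * snd b + w * snd c = snd z"
      unfolding u_def v_def w_def using dnz e2 by (simp add: field_simps)
    ultimately show ?thesis by (simp add: prod_eq_iff)
  qed
  ultimately show ?thesis unfolding convex_hull_3 by blast
qed

definition cvx :: "real \<Rightarrow> pt list \<Rightarrow> bool" where
  "cvx s L \<longleftrightarrow> (\<forall>i j k. i < j \<longrightarrow> j < k \<longrightarrow> k < length L \<longrightarrow> 0 < s * orient (L!i) (L!j) (L!k))"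

lemma pluecker:
  "orient a d w * orient a u z = orient a d u * orient a w z + orient a d z * orient a u w"
  unfolding orient_def by (simp add: algebra_simps)

lemma mod_sum_small:
  fixes i t n :: nat
  assumes "i < n" "t < n"
  shows "(i + t) mod n = (if i + t < n then i + t else i + t - n)"
proof (cases "i + t < n")
  case True then show ?thesis by simp
next
  case False
  then have "(i + t) mod n = (i + t - n) mod n" by (simp add: le_mod_geq)
  also have "\<dots> = i + t - n" using assms by simp
  finally show ?thesis using False by simp
qed

lemma mod_sum_inj:
  fixes i t u n :: nat
  assumes "i < n" "t < n" "u < n" "(i + t) mod n = (i + u) mod n"
  shows "t = u"
  using assms(4) mod_sum_small[OF assms(1,2)] mod_sum_small[OF assms(1,3)] assms(1-3)
  by (auto split: if_splits)

lemma ccw_cvx: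
  assumes ccw: "ccw_cyclic L"
  shows "cvx 1 L"
proof -
  let ?n = "length L"
  have dist: "distinct L" using ccw unfolding ccw_cyclic_def by auto
  have edge: "\<And>e z. e < ?n \<Longrightarrow> z \<in> set L \<Longrightarrow> z \<noteq> L ! e \<Longrightarrow> z \<noteq> L ! ((e+1) mod ?n) \<Longrightarrow>
      orient (L ! e) (L ! ((e+1) mod ?n)) z > 0"
    using ccw unfolding ccw_cyclic_def by blast
  show ?thesis unfolding cvx_def
  proof (intro allI impI)
    fix i j k assume ij: "i < j" and jk: "j < k" and kn: "k < ?n"
    define a where "a = L ! i"
    define w where "w t = L ! ((i + t) mod ?n)" for t
    have nz: "?n > 0" using kn by auto
    have i_lt: "i < ?n" using ij jk kn by simp
    have winj: "w t = w u \<Longrightarrow> t < ?n \<Longrightarrow> u < ?n \<Longrightarrow> t = u" for t u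
    proof -
      assume h: "w t = w u" "t < ?n" "u < ?n"
      then have "(i + t) mod ?n = (i + u) mod ?n" using dist nz unfolding w_def
        by (simp add: nth_eq_iff_index_eq)
      then show "t = u" using mod_sum_inj[OF i_lt h(2,3)] by simp
    qed
    have w0: "w 0 = a" unfolding w_def a_def using i_lt by simp
    have wneq: "w t \<noteq> a" if "1 \<le> t" "t < ?n" for t
      using winj[of t 0] w0 that nz by auto
    have wset: "w t \<in> set L" for t unfolding w_def using nz by simp
    have w1: "w 1 = L ! ((i + 1) mod ?n)" unfolding w_def by simp
    have E1: "orient a (w 1) z > 0" if "z \<in> set L" "z \<noteq> a" "z \<noteq> w 1" for z
      using edge[of i z] that ij jk kn unfolding a_def w1 by auto
    have E2: "orient a (w t) (w (t+1)) > 0" if "1 \<le> t" "t + 1 < ?n" for t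
    proof -
      have e: "(i + t) mod ?n < ?n" using nz by simp
      have nx: "((i + t) mod ?n + 1) mod ?n = (i + (t+1)) mod ?n" by (simp add: mod_Suc_eq)
      have "orient (w t) (w (t+1)) a > 0"
        using edge[OF e, of a] wneq[of t] wneq[of "t+1"] that ij jk kn
        unfolding w_def nx a_def by (auto simp: w_def[symmetric])
      then show ?thesis by (metis orient_cyc)
    qed
    have claim: "\<forall>t. 1 \<le> t \<longrightarrow> t < u \<longrightarrow> u < ?n \<longrightarrow> orient a (w t) (w u) > 0" for u
    proof (induction u)
      case 0 then show ?case by simp
    next
      case (Suc u)
      show ?case
      proof (intro allI impI)
        fix t assume t1: "1 \<le> t" and tu: "t < Suc u" and un: "Suc u < ?n"
        show "orient a (w t) (w (Suc u)) > 0"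
        proof (cases "t = u")
          case True then show ?thesis using E2[of t] t1 un by simp
        next
          case False
          then have tu': "t < u" using tu by simp
          have IH: "orient a (w t) (w u) > 0" using Suc.IH t1 tu' un by simp
          have st: "orient a (w u) (w (Suc u)) > 0" using E2[of u] t1 tu' un by simp
          show ?thesis
          proof (cases "t = 1")
            case True
            have "w (Suc u) \<noteq> w 1" using winj[of "Suc u" 1] un tu' True by auto
            then show ?thesis using E1[of "w (Suc u)"] wset wneq[of "Suc u"] un True by simp
          next
            case False
            then have t2: "2 \<le> t" using t1 by simp
            have g: "orient a (w 1) (w x) > 0" if "2 \<le> x" "x < ?n" for x
            proof -
              have "w x \<noteq> w 1" using winj[of x 1] that by auto
              then show ?thesis using E1[of "w x"] wset wneq[of x] that by simp
            qed
            have dt: "orient a (w 1) (w t) > 0" using g[of t] t2 tu' un by simp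
            have du: "orient a (w 1) (w u) > 0" using g[of u] t2 tu' un by simp
            have dz: "orient a (w 1) (w (Suc u)) > 0" using g[of "Suc u"] t2 tu' un by simp
            have "orient a (w 1) (w u) * orient a (w t) (w (Suc u)) =
                  orient a (w 1) (w t) * orient a (w u) (w (Suc u)) + orient a (w 1) (w (Suc u)) * orient a (w t) (w u)"
              by (rule pluecker)
            also have "\<dots> > 0" using dt st dz IH by (simp add: add_pos_pos)
            finally show ?thesis using du by (simp add: zero_less_mult_iff)
          qed
        qed
      qed
    qed
    have "orient a (w (j - i)) (w (k - i)) > 0" using claim[of "k - i"] ij jk kn by simp
    moreover have "w (j - i) = L ! j" "w (k - i) = L ! k" unfolding w_def using ij jk kn by auto
    ultimately show "0 < 1 * orient (L ! i) (L ! j) (L ! k)" unfolding a_def by simp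
  qed
qed

lemma ccw_rotate:
  assumes "ccw_cyclic L" shows "ccw_cyclic (rotate m L)"
proof -
  let ?n = "length L"
  have edge: "\<And>e z. e < ?n \<Longrightarrow> z \<in> set L \<Longrightarrow> z \<noteq> L ! e \<Longrightarrow> z \<noteq> L ! ((e+1) mod ?n) \<Longrightarrow>
      orient (L ! e) (L ! ((e+1) mod ?n)) z > 0"
    using assms unfolding ccw_cyclic_def by blast
  show ?thesis unfolding ccw_cyclic_def
  proof (intro conjI allI impI ballI)
    show "distinct (rotate m L)" using assms unfolding ccw_cyclic_def by simp
  next
    fix i z assume i: "i < length (rotate m L)" and z: "z \<in> set (rotate m L)"
      and nz: "z \<noteq> rotate m L ! i \<and> z \<noteq> rotate m L ! ((i + 1) mod length (rotate m L))"
    have n0: "?n > 0" using i by auto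
    have r1: "rotate m L ! i = L ! ((m + i) mod ?n)" using i by (simp add: nth_rotate)
    have r2: "rotate m L ! ((i + 1) mod length (rotate m L)) = L ! (((m + i) mod ?n + 1) mod ?n)"
      using i n0 by (simp add: nth_rotate mod_add_right_eq mod_Suc_eq add.assoc)
    show "0 < orient (rotate m L ! i) (rotate m L ! ((i + 1) mod length (rotate m L))) z"
      unfolding r1 r2 using edge[of "(m + i) mod ?n" z] z nz n0 unfolding r1 r2 by simp
  qed
qed

lemma orient_rev: "orient c b a = - orient a b c"
  unfolding orient_def by (simp add: algebra_simps)

definition Inv :: "pt set \<Rightarrow> real \<Rightarrow> pt list \<Rightarrow> bool" where
  "Inv S s L \<longleftrightarrow> distinct L \<and> s \<noteq> 0 \<and> set L \<subseteq> S \<and> cvx s L \<and>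
     (\<forall>v \<in> S - set L. \<forall>i k. i < k \<longrightarrow> k < length L \<longrightarrow> 0 < s * orient (L!i) (L!k) v)"

lemma rev_pos: "0 < s * orient x y z \<Longrightarrow> 0 < - s * orient z y x"
proof -
  assume "0 < s * orient x y z"
  moreover have "orient z y x = - orient x y z" by (simp add: orient_def algebra_simps)
  ultimately show ?thesis by simp
qed

lemma inv_left:
  assumes inv: "Inv S s L" and j: "Suc j < length L"
  shows "Inv S s (take (Suc j) L)"
proof -
  have cv: "\<And>i j k. i < j \<Longrightarrow> j < k \<Longrightarrow> k < length L \<Longrightarrow> 0 < s * orient (L!i) (L!j) (L!k)"
    using inv unfolding Inv_def cvx_def by blast
  have out: "\<And>v i k. v \<in> S - set L \<Longrightarrow> i < k \<Longrightarrow> k < length L \<Longrightarrow> 0 < s * orient (L!i) (L!k) v"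
    using inv unfolding Inv_def by blast
  have "cvx s (take (Suc j) L)" unfolding cvx_def using cv j by auto
  moreover have "\<forall>v \<in> S - set (take (Suc j) L). \<forall>i k. i < k \<longrightarrow> k < length (take (Suc j) L) \<longrightarrow>
      0 < s * orient (take (Suc j) L ! i) (take (Suc j) L ! k) v"
  proof (intro ballI allI impI)
    fix v i k assume v: "v \<in> S - set (take (Suc j) L)" and ik: "i < k" and k: "k < length (take (Suc j) L)"
    show "0 < s * orient (take (Suc j) L ! i) (take (Suc j) L ! k) v"
    proof (cases "v \<in> set L")
      case False then show ?thesis using out[of v i k] v ik k by auto
    next
      case True
      then obtain m where m: "m < length L" "L ! m = v" by (auto simp: in_set_conv_nth)
      have "\<not> m < Suc j"
      proof
        assume "m < Suc j"
        then have "v \<in> set (take (Suc j) L)" using m j by (auto simp: in_set_conv_nth intro!: exI[of _ m])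
        then show False using v by auto
      qed
      then show ?thesis using cv[of i k m] m ik k by auto
    qed
  qed
  ultimately show ?thesis using inv unfolding Inv_def by (auto dest: in_set_takeD)
qed

lemma inv_right:
  assumes inv: "Inv S s L" and j: "Suc j < length L"
  shows "Inv S (- s) (rev (drop (Suc j) L))"
proof -
  have cv: "\<And>i j k. i < j \<Longrightarrow> j < k \<Longrightarrow> k < length L \<Longrightarrow> 0 < s * orient (L!i) (L!j) (L!k)"
    using inv unfolding Inv_def cvx_def by blast
  have out: "\<And>v i k. v \<in> S - set L \<Longrightarrow> i < k \<Longrightarrow> k < length L \<Longrightarrow> 0 < s * orient (L!i) (L!k) v"
    using inv unfolding Inv_def by blast
  define m where "m = length L - Suc j"
  have len: "length (rev (drop (Suc j) L)) = m" unfolding m_def by simp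
  have nth: "rev (drop (Suc j) L) ! i = L ! (Suc j + (m - Suc i))" if "i < m" for i
    using that j unfolding m_def by (simp add: rev_nth)
  have "cvx (- s) (rev (drop (Suc j) L))" unfolding cvx_def len
  proof (intro allI impI)
    fix a b c assume ab: "a < b" and bc: "b < c" and cm: "c < m"
    have "0 < s * orient (L ! (Suc j + (m - Suc c))) (L ! (Suc j + (m - Suc b))) (L ! (Suc j + (m - Suc a)))"
      using ab bc cm j unfolding m_def by (intro cv) auto
    then have "0 < - s * orient (L ! (Suc j + (m - Suc a))) (L ! (Suc j + (m - Suc b))) (L ! (Suc j + (m - Suc c)))"
      by (rule rev_pos)
    moreover have "rev (drop (Suc j) L) ! a = L ! (Suc j + (m - Suc a))"
      "rev (drop (Suc j) L) ! b = L ! (Suc j + (m - Suc b))"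
      "rev (drop (Suc j) L) ! c = L ! (Suc j + (m - Suc c))" using ab bc cm nth by auto
    ultimately show "0 < - s * orient (rev (drop (Suc j) L) ! a) (rev (drop (Suc j) L) ! b) (rev (drop (Suc j) L) ! c)"
      by simp
  qed
  moreover have "\<forall>v \<in> S - set (rev (drop (Suc j) L)). \<forall>i k. i < k \<longrightarrow> k < length (rev (drop (Suc j) L)) \<longrightarrow>
      0 < - s * orient (rev (drop (Suc j) L) ! i) (rev (drop (Suc j) L) ! k) v"
  proof (intro ballI allI impI)
    fix v i k assume v: "v \<in> S - set (rev (drop (Suc j) L))" and ik: "i < k" and k: "k < length (rev (drop (Suc j) L))"
    have k': "k < m" using k len by simp
    have eq: "- s * orient (rev (drop (Suc j) L) ! i) (rev (drop (Suc j) L) ! k) v =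
        s * orient (L ! (Suc j + (m - Suc k))) (L ! (Suc j + (m - Suc i))) v"
    proof -
      have "rev (drop (Suc j) L) ! i = L ! (Suc j + (m - Suc i))"
        "rev (drop (Suc j) L) ! k = L ! (Suc j + (m - Suc k))" using ik k' nth by auto
      moreover have "- s * orient x y v = s * orient y x v" for x y by (simp add: orient_def algebra_simps)
      ultimately show ?thesis by simp
    qed
    show "0 < - s * orient (rev (drop (Suc j) L) ! i) (rev (drop (Suc j) L) ! k) v"
    proof (cases "v \<in> set L")
      case False then show ?thesis unfolding eq using out[of v] v ik k' j unfolding m_def by auto
    next
      case True
      then obtain c where c: "c < length L" "L ! c = v" by (auto simp: in_set_conv_nth)
      have "\<not> Suc j \<le> c"
      proof
        assume "Suc j \<le> c"
        then have "v \<in> set (drop (Suc j) L)" using c by (auto simp: in_set_conv_nth intro!: exI[of _ "c - Suc j"])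
        then show False using v by auto
      qed
      then have "0 < s * orient (L ! c) (L ! (Suc j + (m - Suc k))) (L ! (Suc j + (m - Suc i)))"
        using ik k' j unfolding m_def by (intro cv) auto
      then show ?thesis unfolding eq using c by (metis orient_cyc)
    qed
  qed
  ultimately show ?thesis using inv unfolding Inv_def by (auto dest: in_set_dropD)
qed

lemma inv_hd_last_nonneg:
  assumes inv: "Inv S s L" and v: "v \<in> set L"
  shows "0 \<le> s * orient (hd L) v (last L)"
proof -
  have cv: "\<And>i j k. i < j \<Longrightarrow> j < k \<Longrightarrow> k < length L \<Longrightarrow> 0 < s * orient (L!i) (L!j) (L!k)"
    using inv unfolding Inv_def cvx_def by blast
  obtain t where t: "t < length L" "L ! t = v" using v by (auto simp: in_set_conv_nth)
  have ne: "L \<noteq> []" using v by auto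
  have h: "hd L = L ! 0" and l: "last L = L ! (length L - 1)" using ne by (auto simp: hd_conv_nth last_conv_nth)
  show ?thesis
  proof (cases "t = 0")
    case True then show ?thesis using t h by simp
  next
    case False
    show ?thesis
    proof (cases "t = length L - 1")
      case True then show ?thesis using t l by simp
    next
      case False2: False
      have "t < length L - 1" using t False2 by simp
      then have "0 < s * orient (L ! 0) (L ! t) (L ! (length L - 1))" using cv[of 0 t "length L - 1"] False t by simp
      then show ?thesis using t h l by simp
    qed
  qed
qed

lemma inv_edge_nonneg:
  assumes inv: "Inv S s L" and j: "Suc j < length L" and v: "v \<in> S"
  shows "0 \<le> s * orient (L ! j) (L ! Suc j) v"
proof -
  have cv: "\<And>i j k. i < j \<Longrightarrow> j < k \<Longrightarrow> k < length L \<Longrightarrow> 0 < s * orient (L!i) (L!j) (L!k)"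
    using inv unfolding Inv_def cvx_def by blast
  have out: "\<And>v i k. v \<in> S - set L \<Longrightarrow> i < k \<Longrightarrow> k < length L \<Longrightarrow> 0 < s * orient (L!i) (L!k) v"
    using inv unfolding Inv_def by blast
  show ?thesis
  proof (cases "v \<in> set L")
    case False then show ?thesis using out[of v j "Suc j"] v j by auto
  next
    case True
    then obtain t where t: "t < length L" "L ! t = v" by (auto simp: in_set_conv_nth)
    consider "t < j" | "t = j" | "t = Suc j" | "Suc j < t" by linarith
    then show ?thesis
    proof cases
      case 1 then show ?thesis using cv[of t j "Suc j"] t j by (metis less_eq_real_def orient_cyc lessI)
    next
      case 2 then show ?thesis using t by simp
    next
      case 3 then show ?thesis using t by simp
    next
      case 4 then show ?thesis using cv[of j "Suc j" t] t by simp
    qed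
  qed
qed

lemma aff_orient:
  assumes "z \<in> affine hull {p, q}"
  shows "orient p q z = 0"
proof -
  obtain u v where "z = u *\<^sub>R p + v *\<^sub>R q" "u + v = 1" using assms unfolding affine_hull_2 by auto
  then show ?thesis using orient_comb[of u v p q p q] by simp
qed

lemma orient_aff:
  assumes pq: "p \<noteq> q" and o: "orient p q z = 0"
  shows "z \<in> affine hull {p, q}"
proof -
  have o': "(fst q - fst p) * (snd z - snd p) = (snd q - snd p) * (fst z - fst p)"
    using o unfolding orient_def by simp
  show ?thesis
  proof (cases "fst q = fst p")
    case False
    define t where "t = (fst z - fst p) / (fst q - fst p)"
    have "z = (1 - t) *\<^sub>R p + t *\<^sub>R q"
    proof (rule prod_eqI)
      have "t * (fst q - fst p) = fst z - fst p" using False unfolding t_def by simp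
      then show "fst z = fst ((1 - t) *\<^sub>R p + t *\<^sub>R q)" by (simp add: algebra_simps)
      have "snd z - snd p = t * (snd q - snd p)" using False o' unfolding t_def
        by (simp add: field_simps)
      then show "snd z = snd ((1 - t) *\<^sub>R p + t *\<^sub>R q)" by (simp add: algebra_simps)
    qed
    then show ?thesis unfolding affine_hull_2 by force
  next
    case True
    then have sn: "snd q \<noteq> snd p" using pq by (simp add: prod_eq_iff)
    define t where "t = (snd z - snd p) / (snd q - snd p)"
    have "z = (1 - t) *\<^sub>R p + t *\<^sub>R q"
    proof (rule prod_eqI)
      have "t * (snd q - snd p) = snd z - snd p" using sn unfolding t_def by simp
      then show "snd z = snd ((1 - t) *\<^sub>R p + t *\<^sub>R q)" by (simp add: algebra_simps)
      have "(snd q - snd p) * (fst z - fst p) = 0" using o' True by simp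
      then have "fst z - fst p = 0" using sn by simp
      then have "fst z - fst p = t * (fst q - fst p)" using True by simp
      then show "fst z = fst ((1 - t) *\<^sub>R p + t *\<^sub>R q)" by (simp add: algebra_simps)
    qed
    then show ?thesis unfolding affine_hull_2 by force
  qed
qed

lemma inv_cv: "Inv S s L \<Longrightarrow> i < j \<Longrightarrow> j < k \<Longrightarrow> k < length L \<Longrightarrow> 0 < s * orient (L!i) (L!j) (L!k)"
  unfolding Inv_def cvx_def by blast

lemma split_quad:
  assumes inv: "Inv S s L" and j: "Suc j < length L"
    and H4: "0 \<le> s * orient (L!j) (L!Suc j) z"
    and H1: "0 < s * orient (hd L) z (last L)"
    and H2: "\<not> 0 < s * orient (hd L) z (L!j)"
    and H3: "\<not> 0 < - s * orient (last L) z (L!Suc j)"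
  shows "z \<in> convex hull {hd L, last L, L!Suc j, L!j}"
proof -
  have ne: "L \<noteq> []" using j by auto
  define p where "p = L ! 0"
  define q where "q = L ! (length L - 1)"
  define r where "r = L ! j"
  define t where "t = L ! Suc j"
  have hd: "hd L = p" and lst: "last L = q" using ne unfolding p_def q_def by (auto simp: hd_conv_nth last_conv_nth)
  note H1 = H1[unfolded hd lst] and H2 = H2[unfolded hd lst r_def[symmetric]] and H3 = H3[unfolded hd lst t_def[symmetric]]
  note H4 = H4[unfolded r_def[symmetric] t_def[symmetric]]
  have sub1: "convex hull {p, t, q} \<subseteq> convex hull {p, q, t, r}" by (rule hull_mono) auto
  have sub2: "convex hull {p, r, t} \<subseteq> convex hull {p, q, t, r}" by (rule hull_mono) auto
  show ?thesis unfolding hd lst r_def[symmetric] t_def[symmetric]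
  proof (cases "0 \<le> s * orient p t z")
    case True
    show "z \<in> convex hull {p, q, t, r}"
    proof (cases "Suc j = length L - 1")
      case True2: True
      then have "t = q" unfolding t_def q_def by simp
      then have "0 \<le> s * orient p q z" using True by simp
      moreover have "orient p z q = - orient p q z" by (rule orient_swap)
      ultimately show ?thesis using H1 by simp
    next
      case False
      have D: "0 < s * orient p t q" unfolding p_def t_def q_def using inv_cv[OF inv, of 0 "Suc j" "length L - 1"] False j by simp
      have h2: "0 \<le> s * orient t q z"
      proof -
        have "orient t q z = orient q z t" by (rule orient_cyc)
        then show ?thesis using H3 by simp
      qed
      have h3: "0 \<le> s * orient q p z"
      proof -
        have "orient q p z = orient p z q" by (metis orient_cyc)
        then show ?thesis using H1 by simp
      qed
      show ?thesis using triangle_in_hull[OF D True h2 h3] sub1 by auto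
    qed
  next
    case False
    show "z \<in> convex hull {p, q, t, r}"
    proof (cases "j = 0")
      case True
      then have "r = p" unfolding r_def p_def by simp
      then show ?thesis using H4 False by simp
    next
      case False2: False
      have D: "0 < s * orient p r t" unfolding p_def t_def r_def using inv_cv[OF inv, of 0 j "Suc j"] False2 j by simp
      have h1: "0 \<le> s * orient p r z"
      proof -
        have "orient p r z = - orient p z r" by (rule orient_swap)
        then show ?thesis using H2 by simp
      qed
      have h3: "0 \<le> s * orient t p z"
      proof -
        have "orient t p z = - orient p t z" by (rule orient_swap12)
        then show ?thesis using False by simp
      qed
      show ?thesis using triangle_in_hull[OF D h1 H4 h3] sub2 by auto
    qed
  qed
qed

lemma hd_last_ne: "Inv S s L \<Longrightarrow> 2 \<le> length L \<Longrightarrow> hd L \<noteq> last L"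
proof -
  assume a: "Inv S s L" "2 \<le> length L"
  then have d: "distinct L" unfolding Inv_def by auto
  have ne: "L \<noteq> []" using a by auto
  have "L ! 0 \<noteq> L ! (length L - 1)" using d a by (subst nth_eq_iff_index_eq) auto
  then show ?thesis using ne by (simp add: hd_conv_nth last_conv_nth)
qed

lemma M:
  "qtree_of L T \<Longrightarrow> Inv S s L \<Longrightarrow> P \<subseteq> convex hull S \<Longrightarrow> z \<in> P \<Longrightarrow>
   0 < s * orient (hd L) z (last L) \<Longrightarrow> \<exists>\<pi> nd. (\<pi>, nd) \<in> qnodes T \<and> z \<in> pop P nd"
proof (induction arbitrary: s rule: qtree_of.induct)
  case (1 j L tL tR s)
  note inv = "1.prems"(1)
  have zS: "z \<in> convex hull S" using "1.prems" by auto
  have H4: "0 \<le> s * orient (L!j) (L!Suc j) z"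
    by (rule hull_orient_ge[OF _ zS]) (use inv_edge_nonneg[OF inv "1.hyps"(1)] in auto)
  have H1: "0 < s * orient (hd L) z (last L)" using "1.prems" by simp
  show ?case
  proof (cases "z \<in> convex hull {hd L, last L, L!Suc j, L!j}")
    case True
    have "z \<notin> affine hull {hd L, last L}"
    proof
      assume "z \<in> affine hull {hd L, last L}"
      then have "orient (hd L) (last L) z = 0" by (rule aff_orient)
      moreover have "orient (hd L) z (last L) = - orient (hd L) (last L) z" by (rule orient_swap)
      ultimately show False using H1 by simp
    qed
    then have "z \<in> pop P (hd L, last L, L!Suc j, L!j)" unfolding pop_def using True "1.prems" by auto
    then show ?thesis by (intro exI[of _ "[]"] exI[of _ "(hd L, last L, L!Suc j, L!j)"]) simp
  next
    case False
    then have "0 < s * orient (hd L) z (L!j) \<or> 0 < - s * orient (last L) z (L!Suc j)"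
      using split_quad[OF inv "1.hyps"(1) H4 H1] by blast
    then show ?thesis
    proof
      assume a: "0 < s * orient (hd L) z (L!j)"
      have j0: "j \<noteq> 0"
      proof
        assume "j = 0"
        moreover have "L \<noteq> []" using "1.hyps"(1) by auto
        ultimately have "L ! j = hd L" by (simp add: hd_conv_nth)
        then show False using a by simp
      qed
      then have tl: "qtree_of (take (Suc j) L) tL" and IH: "\<And>s. Inv S s (take (Suc j) L) \<Longrightarrow>
          P \<subseteq> convex hull S \<Longrightarrow> z \<in> P \<Longrightarrow> 0 < s * orient (hd (take (Suc j) L)) z (last (take (Suc j) L)) \<Longrightarrow>
          \<exists>\<pi> nd. (\<pi>, nd) \<in> qnodes tL \<and> z \<in> pop P nd"
        using "1.IH"(1) by auto
      have hl1: "hd (take (Suc j) L) = hd L" using "1.hyps"(1) by (cases L) auto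
      have hl2: "last (take (Suc j) L) = L ! j"
        using "1.hyps"(1) by (subst last_conv_nth) (auto simp: min_def)
      note hl = hl1 hl2
      obtain \<pi> nd where "(\<pi>, nd) \<in> qnodes tL" "z \<in> pop P nd"
        using IH[OF inv_left[OF inv "1.hyps"(1)]] "1.prems" a hl by auto
      then show ?thesis by (intro exI[of _ "False # \<pi>"] exI[of _ nd]) force
    next
      assume a: "0 < - s * orient (last L) z (L!Suc j)"
      have j0: "Suc j \<noteq> length L - 1"
      proof
        assume "Suc j = length L - 1"
        moreover have "L \<noteq> []" using "1.hyps"(1) by auto
        ultimately have "L ! Suc j = last L" by (simp add: last_conv_nth)
        then show False using a by simp
      qed
      then have tl: "qtree_of (rev (drop (Suc j) L)) tR" and IH: "\<And>s. Inv S s (rev (drop (Suc j) L)) \<Longrightarrow>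
          P \<subseteq> convex hull S \<Longrightarrow> z \<in> P \<Longrightarrow> 0 < s * orient (hd (rev (drop (Suc j) L))) z (last (rev (drop (Suc j) L))) \<Longrightarrow>
          \<exists>\<pi> nd. (\<pi>, nd) \<in> qnodes tR \<and> z \<in> pop P nd"
        using "1.IH"(2) by auto
      have hl: "hd (rev (drop (Suc j) L)) = last L" "last (rev (drop (Suc j) L)) = L ! Suc j"
        using "1.hyps"(1) by (auto simp: hd_rev last_rev hd_drop_conv_nth)
      obtain \<pi> nd where "(\<pi>, nd) \<in> qnodes tR" "z \<in> pop P nd"
        using IH[OF inv_right[OF inv "1.hyps"(1)]] "1.prems" a hl by auto
      then show ?thesis by (intro exI[of _ "True # \<pi>"] exI[of _ nd]) force
    qed
  qed
qed

lemma Sub: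
  "qtree_of L T \<Longrightarrow> Inv S s L \<Longrightarrow> (\<pi>, nd) \<in> qnodes T \<Longrightarrow>
   \<exists>L' T' s'. qtree_of L' T' \<and> Inv S s' L' \<and>
     (\<exists>tL tR j. Suc j < length L' \<and> T' = QNode (hd L') (last L') (L'!Suc j) (L'!j) tL tR \<and>
        nd = (hd L', last L', L'!Suc j, L'!j)) \<and>
     (\<forall>\<rho> nd'. (\<rho>, nd') \<in> qnodes T' \<longrightarrow> (\<pi> @ \<rho>, nd') \<in> qnodes T)"
proof (induction arbitrary: s \<pi> rule: qtree_of.induct)
  case (1 j L tL tR s \<pi>)
  have qt: "qtree_of L (QNode (hd L) (last L) (L ! Suc j) (L ! j) tL tR)"
    apply (rule qtree_of.intros) using "1.hyps" "1.IH" by blast+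
  from "1.prems"(2) consider "\<pi> = []" "nd = (hd L, last L, L ! Suc j, L ! j)"
    | \<pi>' where "\<pi> = False # \<pi>'" "(\<pi>', nd) \<in> qnodes tL"
    | \<pi>' where "\<pi> = True # \<pi>'" "(\<pi>', nd) \<in> qnodes tR"
    by auto
  then show ?case
  proof cases
    case 1
    have e: "\<exists>tL' tR' j'. Suc j' < length L \<and> QNode (hd L) (last L) (L ! Suc j) (L ! j) tL tR = QNode (hd L) (last L) (L!Suc j') (L!j') tL' tR' \<and>
        nd = (hd L, last L, L!Suc j', L!j')"
      using 1 "1.hyps"(1) by (intro exI[of _ tL] exI[of _ tR] exI[of _ j]) simp
    show ?thesis
    proof (rule exI[of _ L], rule exI[of _ "QNode (hd L) (last L) (L ! Suc j) (L ! j) tL tR"], rule exI[of _ s], intro conjI)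
      show "qtree_of L (QNode (hd L) (last L) (L ! Suc j) (L ! j) tL tR)" by (rule qt)
      show "Inv S s L" by (rule "1.prems"(1))
      show "\<forall>\<rho> nd'. (\<rho>, nd') \<in> qnodes (QNode (hd L) (last L) (L ! Suc j) (L ! j) tL tR) \<longrightarrow>
          (\<pi> @ \<rho>, nd') \<in> qnodes (QNode (hd L) (last L) (L ! Suc j) (L ! j) tL tR)" using 1(1) by simp
    qed (rule e)
  next
    case (2 \<pi>')
    then have "tL \<noteq> QLeaf" by auto
    then have IH: "\<And>s \<pi>. Inv S s (take (Suc j) L) \<Longrightarrow> (\<pi>, nd) \<in> qnodes tL \<Longrightarrow>
      \<exists>L' T' s'. qtree_of L' T' \<and> Inv S s' L' \<and>
     (\<exists>tL tR j. Suc j < length L' \<and> T' = QNode (hd L') (last L') (L'!Suc j) (L'!j) tL tR \<and>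
        nd = (hd L', last L', L'!Suc j, L'!j)) \<and>
     (\<forall>\<rho> nd'. (\<rho>, nd') \<in> qnodes T' \<longrightarrow> (\<pi> @ \<rho>, nd') \<in> qnodes tL)"
      using "1.IH"(1) by auto
    obtain L' T' s' where o: "qtree_of L' T'" "Inv S s' L'"
      "\<exists>tL tR j. Suc j < length L' \<and> T' = QNode (hd L') (last L') (L'!Suc j) (L'!j) tL tR \<and>
        nd = (hd L', last L', L'!Suc j, L'!j)"
      "\<forall>\<rho> nd'. (\<rho>, nd') \<in> qnodes T' \<longrightarrow> (\<pi>' @ \<rho>, nd') \<in> qnodes tL"
      using IH[OF inv_left[OF "1.prems"(1) "1.hyps"(1)] 2(2)] by blast
    have "\<forall>\<rho> nd'. (\<rho>, nd') \<in> qnodes T' \<longrightarrow> (\<pi> @ \<rho>, nd') \<in> qnodes (QNode (hd L) (last L) (L ! Suc j) (L ! j) tL tR)"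
      using o(4) 2(1) by force
    then show ?thesis using o by blast
  next
    case (3 \<pi>')
    then have "tR \<noteq> QLeaf" by auto
    then have IH: "\<And>s \<pi>. Inv S s (rev (drop (Suc j) L)) \<Longrightarrow> (\<pi>, nd) \<in> qnodes tR \<Longrightarrow>
      \<exists>L' T' s'. qtree_of L' T' \<and> Inv S s' L' \<and>
     (\<exists>tL tR j. Suc j < length L' \<and> T' = QNode (hd L') (last L') (L'!Suc j) (L'!j) tL tR \<and>
        nd = (hd L', last L', L'!Suc j, L'!j)) \<and>
     (\<forall>\<rho> nd'. (\<rho>, nd') \<in> qnodes T' \<longrightarrow> (\<pi> @ \<rho>, nd') \<in> qnodes tR)"
      using "1.IH"(2) by auto
    obtain L' T' s' where o: "qtree_of L' T'" "Inv S s' L'"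
      "\<exists>tL tR j. Suc j < length L' \<and> T' = QNode (hd L') (last L') (L'!Suc j) (L'!j) tL tR \<and>
        nd = (hd L', last L', L'!Suc j, L'!j)"
      "\<forall>\<rho> nd'. (\<rho>, nd') \<in> qnodes T' \<longrightarrow> (\<pi>' @ \<rho>, nd') \<in> qnodes tR"
      using IH[OF inv_right[OF "1.prems"(1) "1.hyps"(1)] 3(2)] by blast
    have "\<forall>\<rho> nd'. (\<rho>, nd') \<in> qnodes T' \<longrightarrow> (\<pi> @ \<rho>, nd') \<in> qnodes (QNode (hd L) (last L) (L ! Suc j) (L ! j) tL tR)"
      using o(4) 3(1) by force
    then show ?thesis using o by blast
  qed
qed

lemma dist_pt: "dist (p::pt) q = sqrt ((fst p - fst q)^2 + (snd p - snd q)^2)"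
  by (simp add: dist_prod_def dist_real_def)

lemma cross_bound:
  fixes a1 a2 b1 b2 :: real
  shows "(a1 * b2 - a2 * b1)^2 \<le> (a1^2 + a2^2) * (b1^2 + b2^2)"
proof -
  have "(a1^2 + a2^2) * (b1^2 + b2^2) - (a1 * b2 - a2 * b1)^2 = (a1 * b1 + a2 * b2)^2"
    by (simp add: power2_eq_square algebra_simps)
  then show ?thesis by (metis diff_ge_0_iff_ge zero_le_power2)
qed

lemma infdist_line:
  assumes pq: "p \<noteq> q"
  shows "infdist z (affine hull {p, q}) = \<bar>orient p q z\<bar> / dist p q"
proof -
  define a1 where "a1 = fst q - fst p"
  define a2 where "a2 = snd q - snd p"
  define b1 where "b1 = fst z - fst p"
  define b2 where "b2 = snd z - snd p"
  define D where "D = a1^2 + a2^2"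
  have "fst q - fst p \<noteq> 0 \<or> snd q - snd p \<noteq> 0" using pq by (auto simp: prod_eq_iff)
  then have Dpos: "D > 0" unfolding D_def a1_def a2_def by (simp add: sum_power2_gt_zero_iff)
  have dpq: "dist p q = sqrt D" unfolding dist_pt D_def a1_def a2_def by (simp add: power2_commute)
  have o: "orient p q z = a1 * b2 - a2 * b1" unfolding orient_def a1_def a2_def b1_def b2_def by simp
  have lower: "\<bar>orient p q z\<bar> / dist p q \<le> dist z w" if w: "w \<in> affine hull {p, q}" for w
  proof -
    have ow: "orient p q w = 0" using aff_orient[OF w] .
    define c1 where "c1 = fst z - fst w"
    define c2 where "c2 = snd z - snd w"
    have "orient p q z = orient p q z - orient p q w" using ow by simp
    also have "\<dots> = a1 * c2 - a2 * c1" unfolding orient_def a1_def a2_def c1_def c2_def by (simp add: algebra_simps)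
    finally have oc: "orient p q z = a1 * c2 - a2 * c1" .
    have "\<bar>orient p q z\<bar> = sqrt ((a1 * c2 - a2 * c1)^2)" using oc by simp
    also have "\<dots> \<le> sqrt (D * (c1^2 + c2^2))" unfolding D_def by (rule real_sqrt_le_mono, rule cross_bound)
    also have "\<dots> = dist p q * dist z w" unfolding dpq by (simp add: dist_pt c1_def c2_def real_sqrt_mult)
    finally show ?thesis using Dpos dpq by (simp add: divide_le_eq mult.commute)
  qed
  define t where "t = (a1 * b1 + a2 * b2) / D"
  define w0 where "w0 = (1 - t) *\<^sub>R p + t *\<^sub>R q"
  have w0in: "w0 \<in> affine hull {p, q}" unfolding w0_def affine_hull_2 by force
  have "(dist z w0)^2 = (b1 - t * a1)^2 + (b2 - t * a2)^2"
    unfolding dist_pt w0_def a1_def a2_def b1_def b2_def by (simp add: algebra_simps)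
  also have "\<dots> = (b1^2 + b2^2) - 2 * t * (a1 * b1 + a2 * b2) + t^2 * D"
    unfolding D_def by (simp add: power2_eq_square algebra_simps)
  also have "\<dots> = (b1^2 + b2^2) - (a1 * b1 + a2 * b2)^2 / D"
    unfolding t_def using Dpos by (simp add: power2_eq_square field_simps)
  also have "\<dots> = ((b1^2 + b2^2) * D - (a1 * b1 + a2 * b2)^2) / D"
    using Dpos by (simp add: field_simps)
  also have "(b1^2 + b2^2) * D - (a1 * b1 + a2 * b2)^2 = (orient p q z)^2"
    unfolding o D_def by (simp add: power2_eq_square algebra_simps)
  finally have "(dist z w0)^2 = (orient p q z)^2 / D" .
  then have "dist z w0 = sqrt ((orient p q z)^2 / D)" by (metis zero_le_dist real_sqrt_unique)
  also have "\<dots> = \<bar>orient p q z\<bar> / dist p q" unfolding dpq by (simp add: real_sqrt_divide)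
  finally have upper: "infdist z (affine hull {p, q}) \<le> \<bar>orient p q z\<bar> / dist p q"
    using infdist_le[OF w0in, of z] by simp
  have "\<bar>orient p q z\<bar> / dist p q \<le> infdist z (affine hull {p, q})"
    unfolding infdist_def using w0in by (auto intro!: cINF_greatest lower)
  then show ?thesis using upper by simp
qed

lemma interior_vertex:
  assumes x: "x \<in> interior (convex hull {a, b, c})" and pq: "p \<noteq> q" and s: "s \<noteq> 0"
  shows "\<exists>v\<in>{a, b, c}. s * orient q p x < s * orient q p v"
proof (rule ccontr)
  assume "\<not> ?thesis"
  then have le: "\<And>v. v \<in> {a, b, c} \<Longrightarrow> s * orient q p v \<le> s * orient q p x" by force
  obtain e where e: "e > 0" "ball x e \<subseteq> convex hull {a, b, c}" using x by (meson mem_interior)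
  define u :: pt where "u = (s * (snd q - snd p), s * (fst p - fst q))"
  have "fst p - fst q \<noteq> 0 \<or> snd p - snd q \<noteq> 0" using pq by (auto simp: prod_eq_iff)
  then have K: "(fst p - fst q)^2 + (snd p - snd q)^2 > 0" by (simp add: sum_power2_gt_zero_iff)
  have un: "norm u > 0"
  proof -
    have "u \<noteq> 0" using s pq unfolding u_def by (auto simp: prod_eq_iff zero_prod_def)
    then show ?thesis by simp
  qed
  define d where "d = e / (2 * norm u)"
  have d: "d > 0" unfolding d_def using e un by simp
  define y where "y = x + d *\<^sub>R u"
  have "dist x y = d * norm u" unfolding y_def using d by (simp add: dist_norm)
  also have "\<dots> = e / 2" unfolding d_def using un by simp
  finally have "y \<in> ball x e" using e by simp
  then have "s * orient q p y \<le> s * orient q p x"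
    using hull_orient_le[of "{a,b,c}" s q p "s * orient q p x" y] le e by blast
  moreover have "s * orient q p y = s * orient q p x + d * s^2 * ((fst p - fst q)^2 + (snd p - snd q)^2)"
    unfolding y_def u_def orient_def by (simp add: power2_eq_square algebra_simps)
  moreover have "d * s^2 * ((fst p - fst q)^2 + (snd p - snd q)^2) > 0" using d s K by simp
  ultimately show False by simp
qed

lemma root_nodes: "([], nd) \<in> qnodes (QNode p q s r tL tR) \<Longrightarrow> nd = (p, q, s, r)"
  by auto

lemma orient_cyc2: "orient p z q = orient q p z"
  by (metis orient_cyc)

lemma absy: "0 < s * (y::real) \<Longrightarrow> \<bar>y\<bar> = s * y / \<bar>s\<bar>"
proof (cases "s > 0")
  case True
  assume "0 < s * y"
  then have "y > 0" using True by (simp add: zero_less_mult_iff)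
  then show ?thesis using True by simp
next
  case False
  assume a: "0 < s * y"
  then have "s < 0" "y < 0" using False by (auto simp: zero_less_mult_iff)
  then show ?thesis by simp
qed

lemma node_step:
  assumes Q: "qtree_of L0 Q" and inv0: "Inv S s0 L0" and PS: "P \<subseteq> convex hull S"
    and nd: "(\<pi>, nd) \<in> qnodes Q" and xp: "x \<in> pop P nd"
    and abc: "a \<in> P" "b \<in> P" "c \<in> P" and xi: "x \<in> interior (convex hull {a, b, c})"
  shows "\<exists>v\<in>{a, b, c}. \<exists>\<pi>' nd'. (\<pi>', nd') \<in> qnodes Q \<and> v \<in> pop P nd' \<and>
     ((\<exists>z. z \<noteq> [] \<and> \<pi>' = \<pi> @ z) \<or>
      (\<pi>' = \<pi> \<and> nd' = nd \<and> (case nd of (p, q, s, r) \<Rightarrow>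
           infdist x (affine hull {p, q}) < infdist v (affine hull {p, q}))))"
proof -
  obtain L' T' s' tL tR j where o: "qtree_of L' T'" "Inv S s' L'" "Suc j < length L'"
    "T' = QNode (hd L') (last L') (L'!Suc j) (L'!j) tL tR" "nd = (hd L', last L', L'!Suc j, L'!j)"
    "\<forall>\<rho> nd'. (\<rho>, nd') \<in> qnodes T' \<longrightarrow> (\<pi> @ \<rho>, nd') \<in> qnodes Q"
    using Sub[OF Q inv0 nd] by blast
  define p where "p = hd L'"
  define q where "q = last L'"
  have pq: "p \<noteq> q" unfolding p_def q_def using hd_last_ne[OF o(2)] o(3) by simp
  have s'0: "s' \<noteq> 0" using o(2) unfolding Inv_def by simp
  have ne: "L' \<noteq> []" using o(3) by auto
  have vert: "\<And>w. w \<in> {p, q, L'!Suc j, L'!j} \<Longrightarrow> 0 \<le> s' * orient q p w"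
  proof -
    fix w assume "w \<in> {p, q, L'!Suc j, L'!j}"
    then have "w \<in> set L'" unfolding p_def q_def using ne o(3) by auto
    then have "0 \<le> s' * orient p w q" unfolding p_def q_def by (rule inv_hd_last_nonneg[OF o(2)])
    then show "0 \<le> s' * orient q p w" using orient_cyc2[of p w q] by simp
  qed
  have xin: "x \<in> convex hull {p, q, L'!Suc j, L'!j}" "x \<notin> affine hull {p, q}" "x \<in> P"
    using xp unfolding o(5) pop_def p_def q_def by auto
  have gx0: "0 \<le> s' * orient q p x" by (rule hull_orient_ge[OF vert xin(1)])
  have "orient p q x \<noteq> 0" using orient_aff[OF pq] xin(2) by blast
  moreover have "orient q p x = - orient p q x" by (rule orient_swap12)
  ultimately have gx: "0 < s' * orient q p x" using gx0 s'0 by (metis less_eq_real_def mult_eq_0_iff neg_equal_0_iff_equal)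
  obtain v where v: "v \<in> {a, b, c}" "s' * orient q p x < s' * orient q p v"
    using interior_vertex[OF xi pq s'0] by blast
  have vP: "v \<in> P" using v abc by auto
  have gv: "0 < s' * orient (hd L') v (last L')" using v gx orient_cyc2[of p v q] unfolding p_def q_def by simp
  obtain \<rho> nd'' where r: "(\<rho>, nd'') \<in> qnodes T'" "v \<in> pop P nd''"
    using M[OF o(1) o(2) PS vP gv] by blast
  have lift: "(\<pi> @ \<rho>, nd'') \<in> qnodes Q" using o(6) r(1) by blast
  show ?thesis
  proof (cases "\<rho> = []")
    case False
    then show ?thesis using v(1) lift r(2) by blast
  next
    case True
    then have nd'': "nd'' = nd" using r(1) o(4) o(5) by auto
    have ox: "\<bar>orient p q x\<bar> = s' * orient q p x / \<bar>s'\<bar>"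
      using absy[OF gx] orient_swap12[of q p x] by simp
    have ov: "\<bar>orient p q v\<bar> = s' * orient q p v / \<bar>s'\<bar>"
      using absy[of s' "orient q p v"] gx v(2) orient_swap12[of q p v] by simp
    have "\<bar>orient p q x\<bar> < \<bar>orient p q v\<bar>" unfolding ox ov using v(2) s'0 by (simp add: divide_strict_right_mono)
    moreover have "dist p q > 0" using pq by simp
    ultimately have "infdist x (affine hull {p, q}) < infdist v (affine hull {p, q})"
      unfolding infdist_line[OF pq] by (simp add: divide_strict_right_mono)
    then have fin: "(\<pi> @ \<rho>, nd'') \<in> qnodes Q \<and> v \<in> pop P nd'' \<and> (\<pi> @ \<rho> = \<pi> \<and> nd'' = nd \<and>
       (case nd of (p, q, s, r) \<Rightarrow> infdist x (affine hull {p, q}) < infdist v (affine hull {p, q})))"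
      using lift r(2) True nd'' unfolding o(5) p_def q_def by simp
    show ?thesis using v(1) fin by blast
  qed
qed

lemma cvx_rev: "cvx s (rev L) \<Longrightarrow> cvx (- s) L"
  unfolding cvx_def
proof (intro allI impI)
  fix i j k assume h: "\<forall>i j k. i < j \<longrightarrow> j < k \<longrightarrow> k < length (rev L) \<longrightarrow>
      0 < s * orient (rev L ! i) (rev L ! j) (rev L ! k)" and ij: "i < j" "j < k" "k < length L"
  let ?n = "length L"
  have "0 < s * orient (rev L ! (?n - Suc k)) (rev L ! (?n - Suc j)) (rev L ! (?n - Suc i))"
    using h ij by auto
  moreover have "rev L ! (?n - Suc k) = L ! k" "rev L ! (?n - Suc j) = L ! j" "rev L ! (?n - Suc i) = L ! i"
    using ij by (auto simp: rev_nth)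
  ultimately have "0 < s * orient (L ! k) (L ! j) (L ! i)" by simp
  then show "0 < - s * orient (L ! i) (L ! j) (L ! k)" by (rule rev_pos)
qed

lemma KM: assumes "finite P" shows "P \<subseteq> convex hull (chP P)"
proof -
  have ext: "{x. x extreme_point_of (convex hull P)} \<subseteq> chP P"
  proof
    fix x assume "x \<in> {x. x extreme_point_of (convex hull P)}"
    then have x: "x extreme_point_of (convex hull P)" by simp
    have "x \<in> P" using extreme_point_of_convex_hull[OF x] .
    moreover have "x \<notin> interior (convex hull P)" using extreme_point_not_in_interior[OF x] .
    moreover have "x \<in> closure (convex hull P)" using x unfolding extreme_point_of_def
      using closure_subset by blast
    ultimately show "x \<in> chP P" unfolding chP_def frontier_def by simp
  qed
  have "P \<subseteq> convex hull P" by (rule hull_subset)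
  also have "\<dots> = convex hull {x. x extreme_point_of (convex hull P)}"
    by (rule Krein_Milman_polytope[OF assms])
  also have "\<dots> \<subseteq> convex hull (chP P)" by (rule hull_mono[OF ext])
  finally show ?thesis .
qed

lemma root:
  assumes fin: "finite P" and qf: "qtree_for P Q"
  obtains L0 s0 where "qtree_of L0 Q" "Inv (chP P) s0 L0" "set L0 = chP P" "2 \<le> length L0"
    "ccw_cyclic L0 \<or> ccw_cyclic (rev L0)"
proof -
  obtain L0 where L0: "set L0 = chP P" "2 \<le> length L0" "ccw_cyclic L0 \<or> ccw_cyclic (rev L0)" "qtree_of L0 Q"
    using qf unfolding qtree_for_def by blast
  have d: "distinct L0" using L0(3) unfolding ccw_cyclic_def by auto
  obtain s0 where s0: "s0 \<noteq> 0" "cvx s0 L0"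
  proof (cases "ccw_cyclic L0")
    case True then show ?thesis using that[of 1] ccw_cvx by auto
  next
    case False
    then have "cvx 1 (rev L0)" using L0(3) ccw_cvx by auto
    then show ?thesis using that[of "-1"] cvx_rev by fastforce
  qed
  have "Inv (chP P) s0 L0" unfolding Inv_def using d s0 L0(1) by auto
  then show ?thesis using that L0 by blast
qed

lemma coverage:
  assumes fin: "finite P" and gp: "gen_pos P" and Q: "qtree_of L0 Q" and inv: "Inv (chP P) s0 L0"
    and setL: "set L0 = chP P" and len: "2 \<le> length L0" and x: "x \<in> P - chP P"
  shows "\<exists>\<pi> nd. (\<pi>, nd) \<in> qnodes Q \<and> x \<in> pop P nd"
proof -
  let ?p = "hd L0" and ?q = "last L0"
  have pq: "?p \<noteq> ?q" using hd_last_ne[OF inv len] .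
  have ne: "L0 \<noteq> []" using len by auto
  have pS: "?p \<in> chP P" "?q \<in> chP P" using setL ne hd_in_set[of L0] last_in_set[of L0] by simp_all
  have SP: "chP P \<subseteq> P" unfolding chP_def by auto
  have PS: "P \<subseteq> convex hull (chP P)" by (rule KM[OF fin])
  have xS: "x \<in> convex hull (chP P)" using PS x by blast
  have g0: "0 \<le> s0 * orient ?q ?p x"
  proof (rule hull_orient_ge[OF _ xS])
    fix v assume "v \<in> chP P"
    then have "0 \<le> s0 * orient ?p v ?q" using inv_hd_last_nonneg[OF inv] setL by auto
    then show "0 \<le> s0 * orient ?q ?p v" using orient_cyc2[of ?p v ?q] by simp
  qed
  have notaff: "x \<notin> affine hull {?p, ?q}"
  proof
    assume "x \<in> affine hull {?p, ?q}"
    moreover have "?p \<in> affine hull {?p, ?q}" by (rule hull_inc) simp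
    moreover have "?q \<in> affine hull {?p, ?q}" by (rule hull_inc) simp
    ultimately have "{x, ?p, ?q} \<subseteq> affine hull {?p, ?q}" by simp
    then have "collinear {x, ?p, ?q}" unfolding collinear_affine_hull by (intro exI)
    moreover have "x \<noteq> ?p" "x \<noteq> ?q" using x pS by auto
    moreover have "x \<in> P" "?p \<in> P" "?q \<in> P" using x pS SP by auto
    ultimately show False using gp[unfolded gen_pos_def, rule_format, of x ?p ?q] pq by simp
  qed
  have "orient ?p ?q x \<noteq> 0" using orient_aff[OF pq] notaff by blast
  moreover have "orient ?q ?p x = - orient ?p ?q x" by (rule orient_swap12)
  moreover have "s0 \<noteq> 0" using inv unfolding Inv_def by simp
  ultimately have "s0 * orient ?q ?p x \<noteq> 0" by simp
  then have "0 < s0 * orient ?q ?p x" using g0 by linarith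
  then have "0 < s0 * orient ?p x ?q" using orient_cyc2[of ?p x ?q] by simp
  moreover have "x \<in> P" using x by simp
  ultimately show ?thesis using M[OF Q inv PS] by blast
qed

lemma leftmost_ex:
  assumes "finite S" "S \<noteq> {}"
  shows "\<exists>a. leftmost_in a S"
proof -
  define m1 where "m1 = Min (fst ` S)"
  define S1 where "S1 = {z \<in> S. fst z = m1}"
  have "m1 \<in> fst ` S" unfolding m1_def using assms by simp
  then have S1ne: "S1 \<noteq> {}" unfolding S1_def by auto
  have S1fin: "finite S1" unfolding S1_def using assms by simp
  define m2 where "m2 = Min (snd ` S1)"
  have "m2 \<in> snd ` S1" unfolding m2_def using S1ne S1fin by simp
  then obtain a where a: "a \<in> S1" "snd a = m2" by auto
  have "leftmost_in a S" unfolding leftmost_in_def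
  proof (intro conjI ballI)
    show "a \<in> S" using a unfolding S1_def by auto
    fix z assume z: "z \<in> S"
    have "m1 \<le> fst z" unfolding m1_def using assms z by simp
    moreover have "fst a = m1" using a unfolding S1_def by auto
    moreover have "fst z = m1 \<Longrightarrow> m2 \<le> snd z" unfolding m2_def using S1fin z unfolding S1_def by auto
    ultimately show "fst a < fst z \<or> fst a = fst z \<and> snd a \<le> snd z" using a
      by (cases "fst z = m1") auto
  qed
  then show ?thesis by blast
qed

lemma hull_order:
  assumes fin: "finite P" and setL: "set L0 = chP P" and len: "2 \<le> length L0"
    and ccw: "ccw_cyclic L0 \<or> ccw_cyclic (rev L0)"
  obtains L1 where "set L1 = chP P" "ccw_cyclic L1" "L1 \<noteq> []" "leftmost_in (hd L1) (chP P)"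
proof -
  define L' where "L' = (if ccw_cyclic L0 then L0 else rev L0)"
  have c: "ccw_cyclic L'" and s: "set L' = chP P" and l: "length L' = length L0"
    unfolding L'_def using ccw setL by auto
  have finS: "finite (chP P)" using fin unfolding chP_def by simp
  have neS: "chP P \<noteq> {}" using setL len by auto
  obtain a where a: "leftmost_in a (chP P)" using leftmost_ex[OF finS neS] by blast
  then have "a \<in> set L'" using s unfolding leftmost_in_def by simp
  then obtain k where k: "k < length L'" "L' ! k = a" by (auto simp: in_set_conv_nth)
  have ne: "L' \<noteq> []" using k by auto
  have "hd (rotate k L') = a" using k ne by (simp add: hd_rotate_conv_nth)
  moreover have "set (rotate k L') = chP P" using s by simp
  moreover have "ccw_cyclic (rotate k L')" using ccw_rotate[OF c] .
  moreover have "rotate k L' \<noteq> []" using ne by simp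
  ultimately show ?thesis using a by (intro that[of "rotate k L'"]) auto
qed

lemma finite_qnodes: "finite (qnodes T)"
  by (induction T) auto

definition nodesof :: "pt set \<Rightarrow> qtree \<Rightarrow> pt \<Rightarrow> (bool list \<times> pt \<times> pt \<times> pt \<times> pt) set" where
  "nodesof P Q x = {pn \<in> qnodes Q. x \<in> pop P (snd pn)}"
definition ldist :: "pt \<times> pt \<times> pt \<times> pt \<Rightarrow> pt \<Rightarrow> real" where
  "ldist nd x = (case nd of (p, q, s, r) \<Rightarrow> infdist x (affine hull {p, q}))"
definition m1 :: "pt set \<Rightarrow> qtree \<Rightarrow> pt \<Rightarrow> nat" where
  "m1 P Q x = Max ((\<lambda>pn. length (fst pn)) ` nodesof P Q x)"
definition m2 :: "pt set \<Rightarrow> qtree \<Rightarrow> pt \<Rightarrow> real" where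
  "m2 P Q x = Max ((\<lambda>pn. ldist (snd pn) x) ` {pn \<in> nodesof P Q x. length (fst pn) = m1 P Q x})"
definition lexlt :: "nat \<times> real \<Rightarrow> nat \<times> real \<Rightarrow> bool" where
  "lexlt a b \<longleftrightarrow> fst a < fst b \<or> (fst a = fst b \<and> snd a < snd b)"
definition mu :: "pt set \<Rightarrow> qtree \<Rightarrow> pt \<Rightarrow> nat \<times> real" where
  "mu P Q x = (m1 P Q x, m2 P Q x)"
definition ht :: "pt set \<Rightarrow> qtree \<Rightarrow> pt \<Rightarrow> nat" where
  "ht P Q x = card {y \<in> P. lexlt (mu P Q x) (mu P Q y)}"

lemma finite_nodesof: "finite (nodesof P Q x)"
  unfolding nodesof_def using finite_qnodes by simp

lemma mu_ge:
  assumes "(\<pi>, nd) \<in> qnodes Q" "y \<in> pop P nd"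
  shows "length \<pi> \<le> m1 P Q y \<and> (length \<pi> = m1 P Q y \<longrightarrow> ldist nd y \<le> m2 P Q y)"
proof -
  have mem: "(\<pi>, nd) \<in> nodesof P Q y" using assms unfolding nodesof_def by simp
  have "length \<pi> \<le> m1 P Q y" unfolding m1_def
    using mem finite_nodesof by (intro Max_ge) (auto intro!: image_eqI[of _ _ "(\<pi>, nd)"])
  moreover have "length \<pi> = m1 P Q y \<longrightarrow> ldist nd y \<le> m2 P Q y"
  proof
    assume l: "length \<pi> = m1 P Q y"
    have fin2: "finite {pn \<in> nodesof P Q y. length (fst pn) = m1 P Q y}" using finite_nodesof by simp
    have "ldist nd y \<in> (\<lambda>pn. ldist (snd pn) y) ` {pn \<in> nodesof P Q y. length (fst pn) = m1 P Q y}"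
      using mem l by (intro image_eqI[of _ _ "(\<pi>, nd)"]) auto
    then show "ldist nd y \<le> m2 P Q y" unfolding m2_def using fin2 by (intro Max_ge) auto
  qed
  ultimately show ?thesis by blast
qed

lemma home:
  assumes "(\<pi>0, nd0) \<in> qnodes Q" "x \<in> pop P nd0"
  shows "\<exists>\<pi> nd. (\<pi>, nd) \<in> qnodes Q \<and> x \<in> pop P nd \<and> length \<pi> = m1 P Q x \<and> ldist nd x = m2 P Q x"
proof -
  have "(\<pi>0, nd0) \<in> nodesof P Q x" using assms unfolding nodesof_def by simp
  then have ne: "nodesof P Q x \<noteq> {}" by blast
  have "m1 P Q x \<in> (\<lambda>pn. length (fst pn)) ` nodesof P Q x" unfolding m1_def
    using ne finite_nodesof by (intro Max_in) auto
  then obtain pn0 where "pn0 \<in> nodesof P Q x" "m1 P Q x = length (fst pn0)" by (auto simp del: fst_conv)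
  then have "pn0 \<in> {pn \<in> nodesof P Q x. length (fst pn) = m1 P Q x}" by simp
  then have ne2: "{pn \<in> nodesof P Q x. length (fst pn) = m1 P Q x} \<noteq> {}" by blast
  have "m2 P Q x \<in> (\<lambda>pn. ldist (snd pn) x) ` {pn \<in> nodesof P Q x. length (fst pn) = m1 P Q x}"
    unfolding m2_def using ne2 finite_nodesof by (intro Max_in) auto
  then obtain pn where "pn \<in> nodesof P Q x" "length (fst pn) = m1 P Q x" "ldist (snd pn) x = m2 P Q x"
    by auto
  then show ?thesis unfolding nodesof_def by (intro exI[of _ "fst pn"] exI[of _ "snd pn"]) auto
qed

lemma lexlt_trans: "lexlt a b \<Longrightarrow> lexlt b c \<Longrightarrow> lexlt a c"
  unfolding lexlt_def by auto

lemma lexlt_irrefl: "\<not> lexlt a a"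
  unfolding lexlt_def by auto

lemma ht_less:
  assumes "finite P" "y \<in> P" "lexlt (mu P Q x) (mu P Q y)"
  shows "ht P Q y < ht P Q x"
proof -
  have "{z \<in> P. lexlt (mu P Q y) (mu P Q z)} \<subset> {z \<in> P. lexlt (mu P Q x) (mu P Q z)}"
    using assms lexlt_trans lexlt_irrefl by blast
  then show ?thesis unfolding ht_def using assms(1) by (intro psubset_card_mono) auto
qed

lemma good_step:
  assumes fin: "finite P" and gp: "gen_pos P" and Q: "qtree_of L0 Q" and inv: "Inv (chP P) s0 L0"
    and setL: "set L0 = chP P" and len: "2 \<le> length L0" and x: "x \<in> P - chP P"
    and abc: "a \<in> P" "b \<in> P" "c \<in> P" and xi: "x \<in> interior (convex hull {a, b, c})"
  shows "\<exists>v\<in>{a, b, c}. qprec P Q x v \<and> lexlt (mu P Q x) (mu P Q v)"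
proof -
  obtain \<pi>0 nd0 where n0: "(\<pi>0, nd0) \<in> qnodes Q" "x \<in> pop P nd0"
    using coverage[OF fin gp Q inv setL len x] by blast
  obtain \<pi> nd where h: "(\<pi>, nd) \<in> qnodes Q" "x \<in> pop P nd" "length \<pi> = m1 P Q x" "ldist nd x = m2 P Q x"
    using home[OF n0] by blast
  have PS: "P \<subseteq> convex hull (chP P)" by (rule KM[OF fin])
  obtain v \<pi>' nd' where v: "v \<in> {a, b, c}" "(\<pi>', nd') \<in> qnodes Q" "v \<in> pop P nd'"
    "(\<exists>z. z \<noteq> [] \<and> \<pi>' = \<pi> @ z) \<or> (\<pi>' = \<pi> \<and> nd' = nd \<and> (case nd of (p, q, s, r) \<Rightarrow>
           infdist x (affine hull {p, q}) < infdist v (affine hull {p, q})))"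
    using node_step[OF Q inv PS h(1) h(2) abc xi] by blast
  have qp: "qprec P Q x v" unfolding qprec_def using h(1,2) v(2-4) by blast
  have mg: "length \<pi>' \<le> m1 P Q v \<and> (length \<pi>' = m1 P Q v \<longrightarrow> ldist nd' v \<le> m2 P Q v)"
    by (rule mu_ge[OF v(2,3)])
  have "lexlt (mu P Q x) (mu P Q v)"
    using v(4)
  proof
    assume "\<exists>z. z \<noteq> [] \<and> \<pi>' = \<pi> @ z"
    then have "length \<pi> < length \<pi>'" by auto
    then show ?thesis using mg h(3) unfolding lexlt_def mu_def by simp
  next
    assume a: "\<pi>' = \<pi> \<and> nd' = nd \<and> (case nd of (p, q, s, r) \<Rightarrow>
           infdist x (affine hull {p, q}) < infdist v (affine hull {p, q}))"
    then have "ldist nd x < ldist nd v" unfolding ldist_def by (auto split: prod.splits)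
    then show ?thesis using mg h(3,4) a unfolding lexlt_def mu_def by auto
  qed
  then show ?thesis using qp v(1) by blast
qed

definition posn :: "pt list \<Rightarrow> pt \<Rightarrow> nat" where
  "posn I x = (THE i. i < length I \<and> I ! i = x)"

lemma posn: "distinct I \<Longrightarrow> x \<in> set I \<Longrightarrow> posn I x < length I \<and> I ! posn I x = x"
  unfolding posn_def by (rule theI') (rule distinct_Ex1)

lemma posn_nth: "distinct I \<Longrightarrow> i < length I \<Longrightarrow> posn I (I ! i) = i"
  using posn[of I "I ! i"] nth_eq_iff_index_eq[of I "posn I (I ! i)" i] by auto

lemma aget_valid: "valid_idx I k \<Longrightarrow> nat k - 1 < length I \<and> aget I k = I ! (nat k - 1)"
  unfolding valid_idx_def aget_def by auto

lemma aget_int: "aget I (int i + 1) = I ! i"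
proof -
  have "int i + 1 = int (Suc i)" by simp
  then show ?thesis unfolding aget_def by (simp only: nat_int) simp
qed

definition corner :: "pt set \<Rightarrow> qtree \<Rightarrow> (int \<times> int \<times> int) list \<Rightarrow> pt list \<Rightarrow> nat \<Rightarrow> int" where
  "corner P Q W I i = (SOME k. k \<in> {fst (W!i), fst (snd (W!i)), snd (snd (W!i))} \<and>
      qprec P Q (I!i) (aget I k) \<and> lexlt (mu P Q (I!i)) (mu P Q (aget I k)))"

lemma witness_row:
  assumes "is_witness P I W" "i < length I"
  shows "case W ! i of (a, b, c) \<Rightarrow>
        (if I ! i \<in> chP P then a = -1 \<and> b = -1 \<and> c = -1
         else valid_idx I a \<and> valid_idx I b \<and> valid_idx I c \<and>
              I ! i \<in> interior (convex hull {aget I a, aget I b, aget I c}))"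
proof -
  have all: "\<forall>i < length I. (case W ! i of (a, b, c) \<Rightarrow>
        (if I ! i \<in> chP P then a = -1 \<and> b = -1 \<and> c = -1
         else valid_idx I a \<and> valid_idx I b \<and> valid_idx I c \<and>
              I ! i \<in> interior (convex hull {aget I a, aget I b, aget I c})))"
    using assms(1) unfolding is_witness_def by (rule conjunct2)
  show ?thesis by (rule all[rule_format, OF assms(2)])
qed

lemma witness_at:
  assumes "is_witness P I W" "i < length I" "I ! i \<notin> chP P"
  shows "valid_idx I (fst (W!i)) \<and> valid_idx I (fst (snd (W!i))) \<and> valid_idx I (snd (snd (W!i))) \<and>
    I ! i \<in> interior (convex hull {aget I (fst (W!i)), aget I (fst (snd (W!i))), aget I (snd (snd (W!i)))})"
proof -
  obtain a b c where w: "W ! i = (a, b, c)" by (cases "W ! i") auto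
  have "valid_idx I a \<and> valid_idx I b \<and> valid_idx I c \<and>
              I ! i \<in> interior (convex hull {aget I a, aget I b, aget I c})"
    using witness_row[OF assms(1,2)] assms(3) unfolding w by (simp only: prod.case if_False)
  then show ?thesis unfolding w by (simp only: fst_conv snd_conv)
qed

lemma witness_hull:
  assumes "is_witness P I W" "i < length I" "I ! i \<in> chP P"
  shows "fst (W!i) = -1"
proof -
  obtain a b c where w: "W ! i = (a, b, c)" by (cases "W ! i") auto
  have "a = -1 \<and> b = -1 \<and> c = -1"
    using witness_row[OF assms(1,2)] assms(3) unfolding w by (simp only: prod.case if_True)
  then show ?thesis unfolding w by simp
qed

lemma corner_ok:
  assumes fin: "finite P" and gp: "gen_pos P" and Q: "qtree_of L0 Q" and inv: "Inv (chP P) s0 L0"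
    and setL: "set L0 = chP P" and len: "2 \<le> length L0"
    and I: "distinct I" "set I = P" "is_witness P I W" and i: "i < length I" "I ! i \<notin> chP P"
  shows "corner P Q W I i \<in> {fst (W!i), fst (snd (W!i)), snd (snd (W!i))} \<and>
    valid_idx I (corner P Q W I i) \<and>
    qprec P Q (I!i) (aget I (corner P Q W I i)) \<and> lexlt (mu P Q (I!i)) (mu P Q (aget I (corner P Q W I i)))"
proof -
  let ?a = "fst (W!i)" and ?b = "fst (snd (W!i))" and ?c = "snd (snd (W!i))"
  have w: "valid_idx I ?a" "valid_idx I ?b" "valid_idx I ?c"
    "I ! i \<in> interior (convex hull {aget I ?a, aget I ?b, aget I ?c})"
    using witness_at[OF I(3) i] by auto
  have inP: "aget I k \<in> P" if "valid_idx I k" for k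
  proof -
    have "I ! (nat k - 1) \<in> set I" using aget_valid[OF that] by (intro nth_mem) simp
    then show ?thesis using aget_valid[OF that] I(2) by simp
  qed
  have "I ! i \<in> set I" using i(1) by (rule nth_mem)
  then have xP: "I ! i \<in> P - chP P" using i(2) I(2) by simp
  obtain v where v: "v \<in> {aget I ?a, aget I ?b, aget I ?c}" "qprec P Q (I!i) v" "lexlt (mu P Q (I!i)) (mu P Q v)"
    using good_step[OF fin gp Q inv setL len xP inP[OF w(1)] inP[OF w(2)] inP[OF w(3)] w(4)] by blast
  then have ex: "\<exists>k. k \<in> {?a, ?b, ?c} \<and> qprec P Q (I!i) (aget I k) \<and> lexlt (mu P Q (I!i)) (mu P Q (aget I k))"
    by blast
  have "corner P Q W I i \<in> {?a, ?b, ?c} \<and> qprec P Q (I!i) (aget I (corner P Q W I i)) \<and>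
      lexlt (mu P Q (I!i)) (mu P Q (aget I (corner P Q W I i)))"
    unfolding corner_def by (rule someI_ex[OF ex])
  moreover have "\<forall>k\<in>{?a, ?b, ?c}. valid_idx I k" using w(1-3) by blast
  ultimately show ?thesis by blast
qed

lemma rank_inj:
  fixes T :: "nat set"
  assumes "finite T" "a \<in> T" "b \<in> T" "card {t \<in> T. t < a} = card {t \<in> T. t < b}"
  shows "a = b"
proof (rule ccontr)
  assume "a \<noteq> b"
  then consider "a < b" | "b < a" by linarith
  then show False
  proof cases
    case 1
    then have "{t \<in> T. t < a} \<subset> {t \<in> T. t < b}" using assms(2) by auto
    then have "card {t \<in> T. t < a} < card {t \<in> T. t < b}" using assms(1) by (intro psubset_card_mono) auto
    then show False using assms(4) by simp
  next
    case 2
    then have "{t \<in> T. t < b} \<subset> {t \<in> T. t < a}" using assms(3) by auto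
    then have "card {t \<in> T. t < b} < card {t \<in> T. t < a}" using assms(1) by (intro psubset_card_mono) auto
    then show False using assms(4) by simp
  qed
qed

lemma lin_pos:
  fixes f :: "'a \<Rightarrow> nat"
  assumes "inj_on f A"
  shows "linear_order_on A {(u, w). u \<in> A \<and> w \<in> A \<and> f u \<le> f w}"
  using assms unfolding linear_order_on_def partial_order_on_def preorder_on_def refl_on_def trans_def
    antisym_def total_on_def inj_on_def
  by auto

theorem lemma5p3:
  fixes P :: "pt set" and n :: nat and W :: "(int \<times> int \<times> int) list" and Q :: qtree
  assumes "finite P" and "card P = n" and "gen_pos P"
    and "length W = n"
    and "qtree_for P Q"
  shows "\<exists>\<Phi>. inj_on \<Phi> (V P W) \<and> \<Phi> ` V P W \<subseteq> OD P Q \<times> CA W \<times> HL P"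
proof -
  define S where "S = chP P"
  obtain L0 s0 where r: "qtree_of L0 Q" "Inv S s0 L0" "set L0 = S" "2 \<le> length L0"
    "ccw_cyclic L0 \<or> ccw_cyclic (rev L0)"
    using root[OF assms(1) assms(5)] unfolding S_def by blast
  obtain L1 where h: "set L1 = S" "ccw_cyclic L1" "L1 \<noteq> []" "leftmost_in (hd L1) S"
    using hull_order[OF assms(1) r(3)[unfolded S_def] r(4) r(5)] unfolding S_def by blast
  have SP: "S \<subseteq> P" unfolding S_def chP_def by blast
  note cok = corner_ok[OF assms(1) assms(3) r(1) r(2)[unfolded S_def] r(3)[unfolded S_def] r(4), folded S_def]
  define phi where "phi I = restrict (\<lambda>x. aget I (corner P Q W I (posn I x))) (P - S)" for I
  define R where "R I = {(u, w). u \<in> P - S \<and> w \<in> P - S \<and> phi I u = phi I w \<and> posn I u \<le> posn I w}" for I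
  define C where "C I = map (\<lambda>i. if I ! i \<in> S then fst (W ! i) else corner P Q W I i) [0..<length W]" for I
  define hs where "hs I = map (\<lambda>v. int (posn I v) + 1) L1" for I
  define Phi where "Phi I = ((phi I, R I), C I, hs I)" for I
  have VI: "distinct I \<and> set I = P \<and> length I = n \<and> is_witness P I W" if "I \<in> V P W" for I
  proof -
    have d: "distinct I" "set I = P" "is_witness P I W" using that unfolding V_def arrays_def by auto
    have "length I = n" using distinct_card[OF d(1)] d(2) assms(2) by simp
    then show ?thesis using d by simp
  qed
  have posinj: "u = w" if "I \<in> V P W" "u \<in> P" "w \<in> P" "posn I u = posn I w" for I u w
  proof -
    have d: "distinct I" "set I = P" using VI[OF that(1)] by (simp_all only: simp_thms)
    have u1: "u \<in> set I" and w1: "w \<in> set I" using that(2,3) d(2) by simp_all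
    have e: "I ! posn I u = u" "I ! posn I w = w"
      by (rule conjunct2[OF posn[OF d(1) u1]], rule conjunct2[OF posn[OF d(1) w1]])
    have "u = I ! posn I u" using e(1) by (rule sym)
    also have "\<dots> = I ! posn I w" using that(4) by (rule arg_cong)
    also have "\<dots> = w" by (rule e(2))
    finally show ?thesis .
  qed
  have phiI: "phi I x = aget I (corner P Q W I (posn I x)) \<and> phi I x \<in> P \<and>
      qprec P Q x (phi I x) \<and> lexlt (mu P Q x) (mu P Q (phi I x))"
    if I: "I \<in> V P W" and x: "x \<in> P - S" for I x
  proof -
    have d: "distinct I" "set I = P" "is_witness P I W" using VI[OF I] by (simp_all only: simp_thms)
    have xs: "x \<in> set I" using x d(2) by simp
    have p: "posn I x < length I" "I ! posn I x = x" using posn[OF d(1) xs] by auto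
    have nS: "I ! posn I x \<notin> S" using p(2) x by simp
    have c: "valid_idx I (corner P Q W I (posn I x))"
      "qprec P Q (I ! posn I x) (aget I (corner P Q W I (posn I x)))"
      "lexlt (mu P Q (I ! posn I x)) (mu P Q (aget I (corner P Q W I (posn I x))))"
      using cok[OF d(1) d(2) d(3) p(1) nS] by auto
    have ph: "phi I x = aget I (corner P Q W I (posn I x))" unfolding phi_def using x by simp
    have inP: "aget I (corner P Q W I (posn I x)) \<in> P"
      using aget_valid[OF c(1)] d(2) nth_mem[of "nat (corner P Q W I (posn I x)) - 1" I] by simp
    show ?thesis using ph inP c(2,3) p(2) by simp
  qed
  have idx: "phi I (I ! i) = I ! (nat (C I ! i) - 1) \<and> nat (C I ! i) - 1 < n"
    if I: "I \<in> V P W" and i: "i < n" and nS: "I ! i \<notin> S" for I i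
  proof -
    have d: "distinct I" "set I = P" "length I = n" "is_witness P I W" using VI[OF I] by (simp_all only: simp_thms)
    have iI: "i < length I" using i d(3) by simp
    have xP: "I ! i \<in> P - S" using nS d(2) nth_mem[OF iI] by simp
    have pi: "posn I (I ! i) = i" using posn_nth[OF d(1) iI] .
    have Ci: "C I ! i = corner P Q W I i" unfolding C_def using i assms(4) nS by simp
    have v: "valid_idx I (corner P Q W I i)" using cok[OF d(1) d(2) d(4) iI nS] by auto
    show ?thesis using phiI[OF I xP] aget_valid[OF v] pi Ci d(3) by simp
  qed
  have OD: "(phi I, R I) \<in> OD P Q" if I: "I \<in> V P W" for I
  proof -
    have pe: "phi I \<in> (P - S) \<rightarrow>\<^sub>E P" unfolding PiE_iff
    proof
      show "\<forall>x\<in>P - S. phi I x \<in> P" using phiI[OF I] by blast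
      show "phi I \<in> extensional (P - S)" unfolding phi_def by simp
    qed
    have lin: "linear_order_on {x \<in> P - S. phi I x = y}
                (R I \<inter> ({x \<in> P - S. phi I x = y} \<times> {x \<in> P - S. phi I x = y}))" for y
    proof -
      let ?F = "{x \<in> P - S. phi I x = y}"
      have "inj_on (posn I) ?F" unfolding inj_on_def using posinj[OF I] by blast
      then have "linear_order_on ?F {(u, w). u \<in> ?F \<and> w \<in> ?F \<and> posn I u \<le> posn I w}" by (rule lin_pos)
      moreover have "R I \<inter> (?F \<times> ?F) = {(u, w). u \<in> ?F \<and> w \<in> ?F \<and> posn I u \<le> posn I w}"
        unfolding R_def by auto
      ultimately show ?thesis by simp
    qed
    have "R I \<subseteq> {(a, b). a \<in> P - S \<and> b \<in> P - S \<and> phi I a = phi I b}" unfolding R_def by blast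
    then show ?thesis unfolding OD_def S_def[symmetric] using pe lin phiI[OF I] by blast
  qed
  have CA: "C I \<in> CA W" if I: "I \<in> V P W" for I
  proof -
    have d: "distinct I" "set I = P" "length I = n" "is_witness P I W" using VI[OF I] by (simp_all only: simp_thms)
    have "case W ! i of (a, b, c) \<Rightarrow> C I ! i \<in> {a, b, c}" if i: "i < length W" for i
    proof -
      obtain a b c where w: "W ! i = (a, b, c)" by (cases "W ! i") auto
      have iI: "i < length I" using i d(3) assms(4) by simp
      have "C I ! i \<in> {fst (W ! i), fst (snd (W ! i)), snd (snd (W ! i))}"
      proof (cases "I ! i \<in> S")
        case True then show ?thesis unfolding C_def using i by simp
      next
        case False then show ?thesis unfolding C_def using i cok[OF d(1) d(2) d(4) iI False] by simp
      qed
      then show ?thesis unfolding w by simp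
    qed
    moreover have "length (C I) = length W" unfolding C_def by simp
    ultimately show ?thesis unfolding CA_def by blast
  qed
  have HLm: "hs I \<in> HL P" if I: "I \<in> V P W" for I
  proof -
    have d: "distinct I" "set I = P" "length I = n" "is_witness P I W" using VI[OF I] by (simp_all only: simp_thms)
    have vP: "v \<in> set I" if "v \<in> set L1" for v using that h(1) SP d(2) by blast
    have mp: "map (aget I) (hs I) = L1" unfolding hs_def
    proof (simp only: map_map comp_def, rule map_idI)
      fix v assume "v \<in> set L1"
      then show "aget I (int (posn I v) + 1) = v" using posn[OF d(1) vP] aget_int by simp
    qed
    have "is_hull_list P I (hs I)" unfolding is_hull_list_def
    proof (intro conjI ballI)
      fix k assume "k \<in> set (hs I)"
      then obtain v where v: "v \<in> set L1" "k = int (posn I v) + 1" unfolding hs_def by auto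
      have "posn I v < length I" using conjunct1[OF posn[OF d(1) vP[OF v(1)]]] .
      then show "valid_idx I k" unfolding valid_idx_def using v(2) by simp
    next
      show "set (map (aget I) (hs I)) = chP P" using mp h(1) unfolding S_def by simp
      show "ccw_cyclic (map (aget I) (hs I))" using mp h(2) by simp
      show "hs I \<noteq> []" using h(3) unfolding hs_def by simp
      have "aget I (hd (hs I)) = hd L1" using mp h(3) by (metis hd_map map_is_Nil_conv)
      then show "leftmost_in (aget I (hd (hs I))) (chP P)" using h(4) unfolding S_def by simp
    qed
    moreover have "I \<in> arrays P" using d unfolding arrays_def by simp
    ultimately show ?thesis unfolding HL_def by blast
  qed
  have inj: "inj_on Phi (V P W)"
  proof (rule inj_onI)
    fix I1 I2 assume I1: "I1 \<in> V P W" and I2: "I2 \<in> V P W" and eq: "Phi I1 = Phi I2"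
    have d1: "distinct I1" "set I1 = P" "length I1 = n" using VI[OF I1] by (simp_all only: simp_thms)
    have d2: "distinct I2" "set I2 = P" "length I2 = n" using VI[OF I2] by (simp_all only: simp_thms)
    have ephi: "phi I1 = phi I2" and eR: "R I1 = R I2" and eC: "C I1 = C I2" and ehs: "hs I1 = hs I2"
      using eq unfolding Phi_def by auto
    have hullpos: "posn I1 v = posn I2 v" if "v \<in> S" for v
      using ehs that h(1) unfolding hs_def by auto
    have hullidx: "I1 ! i \<in> S \<longleftrightarrow> I2 ! i \<in> S" if i: "i < n" for i
    proof
      assume a: "I1 ! i \<in> S"
      have "posn I2 (I1 ! i) = i" using hullpos[OF a] posn_nth[OF d1(1)] i d1(3) by simp
      moreover have "I1 ! i \<in> set I2" using a SP d2(2) by blast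
      then have "I2 ! posn I2 (I1 ! i) = I1 ! i" by (rule conjunct2[OF posn[OF d2(1)]])
      ultimately show "I2 ! i \<in> S" using a by simp
    next
      assume a: "I2 ! i \<in> S"
      have "posn I1 (I2 ! i) = i" using hullpos[OF a] posn_nth[OF d2(1)] i d2(3) by simp
      moreover have "I2 ! i \<in> set I1" using a SP d1(2) by blast
      then have "I1 ! posn I1 (I2 ! i) = I2 ! i" by (rule conjunct2[OF posn[OF d1(1)]])
      ultimately show "I1 ! i \<in> S" using a by simp
    qed
    have main: "\<forall>x\<in>P. ht P Q x = m \<longrightarrow> posn I1 x = posn I2 x" for m
    proof (induction m rule: less_induct)
      case (less m)
      show ?case
      proof (intro ballI impI)
        fix x assume xP: "x \<in> P" and hx: "ht P Q x = m"
        show "posn I1 x = posn I2 x"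
        proof (cases "x \<in> S")
          case True then show ?thesis by (rule hullpos)
        next
          case False
          then have xPS: "x \<in> P - S" using xP by simp
          define y where "y = phi I1 x"
          have yP: "y \<in> P" and lt: "lexlt (mu P Q x) (mu P Q y)" using phiI[OF I1 xPS] unfolding y_def by auto
          have "ht P Q y < m" using ht_less[OF assms(1) yP lt] hx by simp
          then have py: "posn I1 y = posn I2 y" using less.IH yP by blast
          define F where "F = {u \<in> P - S. phi I1 u = y}"
          have xF: "x \<in> F" unfolding F_def y_def using xPS by simp
          have Fsub: "F \<subseteq> P" unfolding F_def by blast
          have charac: "posn I ` F = {i. i < n \<and> I ! i \<notin> S \<and> nat (C I1 ! i) - 1 = posn I y}"
            if I: "I \<in> V P W" and ph: "phi I = phi I1" and cc: "C I = C I1" for I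
          proof -
            have d: "distinct I" "set I = P" "length I = n" using VI[OF I] by (simp_all only: simp_thms)
            show ?thesis
            proof (intro set_eqI iffI)
              fix i assume "i \<in> posn I ` F"
              then obtain u where u: "u \<in> F" "i = posn I u" by blast
              have uI: "u \<in> set I" using u(1) Fsub d(2) by blast
              have pu: "posn I u < n" "I ! posn I u = u" using posn[OF d(1) uI] d(3) by simp_all
              have uS: "I ! i \<notin> S" using u pu unfolding F_def by simp
              have ix: "phi I (I ! i) = I ! (nat (C I ! i) - 1)" "nat (C I ! i) - 1 < n"
                using idx[OF I _ uS] u(2) pu by auto
              have "I ! (nat (C I ! i) - 1) = y" using ix(1) u pu ph unfolding F_def by simp
              then have "posn I y = nat (C I ! i) - 1" using posn_nth[OF d(1)] ix(2) d(3) by metis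
              then show "i \<in> {i. i < n \<and> I ! i \<notin> S \<and> nat (C I1 ! i) - 1 = posn I y}"
                using u(2) pu uS cc by simp
            next
              fix i assume "i \<in> {i. i < n \<and> I ! i \<notin> S \<and> nat (C I1 ! i) - 1 = posn I y}"
              then have i: "i < n" "I ! i \<notin> S" "nat (C I ! i) - 1 = posn I y" using cc by auto
              have ix: "phi I (I ! i) = I ! (nat (C I ! i) - 1)" using idx[OF I i(1) i(2)] by simp
              have yI: "y \<in> set I" using yP d(2) by simp
              have "phi I (I ! i) = y" using ix i(3) posn[OF d(1) yI] by simp
              moreover have "I ! i \<in> P" using nth_mem[of i I] i(1) d(2,3) by simp
              ultimately have "I ! i \<in> F" unfolding F_def using i(2) ph by simp
              moreover have "i = posn I (I ! i)" using posn_nth[OF d(1)] i(1) d(3) by simp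
              ultimately show "i \<in> posn I ` F" by blast
            qed
          qed
          have T: "posn I1 ` F = posn I2 ` F"
            using charac[OF I1 refl refl] charac[OF I2 ephi[symmetric] eC[symmetric]] hullidx py by auto
          have ord: "posn I1 u \<le> posn I1 w \<longleftrightarrow> posn I2 u \<le> posn I2 w" if "u \<in> F" "w \<in> F" for u w
          proof -
            have "(u, w) \<in> R I1 \<longleftrightarrow> posn I1 u \<le> posn I1 w" using that unfolding R_def F_def by auto
            moreover have "(u, w) \<in> R I2 \<longleftrightarrow> posn I2 u \<le> posn I2 w" using that ephi unfolding R_def F_def by auto
            ultimately show ?thesis using eR by simp
          qed
          have below: "{w \<in> F. posn I1 w < posn I1 x} = {w \<in> F. posn I2 w < posn I2 x}"
          proof (rule set_eqI)
            fix w
            have "w \<in> F \<Longrightarrow> (posn I1 w < posn I1 x \<longleftrightarrow> posn I2 w < posn I2 x)"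
              using ord[OF xF, of w] by (metis not_le)
            then show "w \<in> {w \<in> F. posn I1 w < posn I1 x} \<longleftrightarrow> w \<in> {w \<in> F. posn I2 w < posn I2 x}"
              by blast
          qed
          have rank: "card {t \<in> posn I ` F. t < posn I x} = card {w \<in> F. posn I w < posn I x}"
            if I: "I \<in> V P W" for I
          proof -
            have "{t \<in> posn I ` F. t < posn I x} = posn I ` {w \<in> F. posn I w < posn I x}" by blast
            moreover have "inj_on (posn I) {w \<in> F. posn I w < posn I x}"
              unfolding inj_on_def using posinj[OF I] Fsub by blast
            ultimately show ?thesis by (simp add: card_image)
          qed
          have finF: "finite (posn I1 ` F)" using Fsub assms(1) finite_subset by blast
          have "card {t \<in> posn I1 ` F. t < posn I1 x} = card {t \<in> posn I1 ` F. t < posn I2 x}"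
            using rank[OF I1] rank[OF I2] below T by simp
          then show ?thesis using rank_inj[OF finF] xF T by blast
        qed
      qed
    qed
    show "I1 = I2"
    proof (rule nth_equalityI)
      show "length I1 = length I2" using d1 d2 by simp
      fix i assume i: "i < length I1"
      have xP: "I1 ! i \<in> P" using nth_mem[OF i] d1(2) by simp
      have "posn I1 (I1 ! i) = i" using posn_nth[OF d1(1) i] .
      then have "posn I2 (I1 ! i) = i" using main xP by simp
      moreover have "I1 ! i \<in> set I2" using xP d2(2) by blast
      then have "I2 ! posn I2 (I1 ! i) = I1 ! i" by (rule conjunct2[OF posn[OF d2(1)]])
      ultimately show "I1 ! i = I2 ! i" by simp
    qed
  qed
  have "Phi ` V P W \<subseteq> OD P Q \<times> CA W \<times> HL P" unfolding Phi_def using OD CA HLm by blast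
  then show ?thesis using inj by blast
qed

end
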